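(* Let $V$ be a Banach $\mathbb O$-bimodule and $T\in\mathscr B_{\mathcal{RO}}(V)$. The following are equivalent: (1) $[T,T^{\circledcirc n},x]_{\circledcirc}=0$ for all $x\in V$ and all $n=0,1,2,\dots$; (2) $T^n\in\mathscr B_{\mathcal{RO}}(V)$ for all $n=0,1,2,\dots$; (3) $[T^{n\circledcirc},T,x]_{\circledcirc}=0$ for all $x\in V$ and all $n=0,1,2,\dots$. Moreover, under any of these conditions $T^{\circledcirc n}=T^n=T^{n\circledcirc}$ for all $n$, and hence $T^n\circledcirc T^m=T^{n+m}$.
   Context: $\mathbb O$ is the real octonion algebra with basis $e_0=1,\dots,e_7$ and conjugation $\bar x$. An $\mathbb O$-bimodule is a real vector space $M$ with real-bilinear left and right multiplications by $\mathbb O$ (with $1x=x1=x$) whose associators $[p,q,x]=(pq)x-p(qx)$, $[p,x,q]=(px)q-p(xq)$, $[x,p,q]=(xp)q-x(pq)$ satisfy $[p,q,x]=[q,x,p]=[x,p,q]=-[q,p,x]$. Its real part is $\operatorname{Re}M=\{m: pm=mp,\ [p,q,m]=0\ \forall p,q\}$; every $x$ decomposes uniquely as $x=\sum_{i=0}^7e_ix_i$ with $x_i\in\operatorname{Re}M$ and $\operatorname{Re}x:=x_0$. A Banach $\mathbb O$-bimodule is one with a complete norm with $\|px\|=\|xp\|=|p|\|x\|$. $\mathscr B_{\mathbb R}(V)$: bounded real-linear operators, powers $T^n$ by ordinary composition, $T^0=\mathcal I$. For real-linear $f$, $B_p(f,x)=f(x)p-f(xp)$; $f$ is right para-linear if $\operatorname{Re}B_p(f,x)=0$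 for all $p\in\mathbb O,x$; $\mathscr B_{\mathcal{RO}}(V)$ is the set of bounded right para-linear operators. For real-linear $h:\operatorname{Re}V\to V$, $(\operatorname{ext}h)(\sum_ix_ie_i)=\sum_ih(x_i)e_i$ ($x_i\in\operatorname{Re}V$); for real-linear $h:V\to\operatorname{Re}V$, $(\operatorname{lif}h)(x)=\sum_{i=0}^7h(x\bar e_i)e_i$. $T^{\circledcirc n}=\operatorname{ext}(T^n|_{\operatorname{Re}V})$, $T^{n\circledcirc}=\operatorname{lif}(\operatorname{Re}\circ T^n)$. For $f,g\in\mathscr B_{\mathcal{RO}}(V)$: $f\circledcirc g=\operatorname{ext}((f\circ g)|_{\operatorname{Re}V})$ (equivalently $\operatorname{lif}(\operatorname{Re}\circ f\circ g)$) and $[f,g,x]_{\circledcirc}=(f\circledcirc g)(x)-f(g(x))$. *)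

theory Defs
  imports "HOL-Analysis.Analysis"
begin

text \<open>Quaternions as pairs of complex numbers, octonions as pairs of quaternions.
  The product types carry the real vector space structure and the Euclidean
  norm from HOL-Analysis (Product_Vector).\<close>

type_synonym quat = "complex \<times> complex"
type_synonym oct = "quat \<times> quat"

definition qmul :: "quat \<Rightarrow> quat \<Rightarrow> quat" where
  "qmul x y = (case x of (a, b) \<Rightarrow> case y of (c, d) \<Rightarrow>
      (a * c - cnj d * b, d * a + b * cnj c))"

definition qcnj :: "quat \<Rightarrow> quat" where
  "qcnj x = (case x of (a, b) \<Rightarrow> (cnj a, - b))"

definition omul :: "oct \<Rightarrow> oct \<Rightarrow> oct" where
  "omul x y = (case x of (a, b) \<Rightarrow> case y of (c, d) \<Rightarrow>
      (qmul a c - qmul (qcnj d) b, qmul d a + qmul b (qcnj c)))"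

definition ocnj :: "oct \<Rightarrow> oct" where
  "ocnj x = (case x of (a, b) \<Rightarrow> (qcnj a, - b))"

definition qbasis :: "nat \<Rightarrow> quat" where
  "qbasis i = (if i = 0 then (1, 0) else if i = 1 then (\<i>, 0)
               else if i = 2 then (0, 1) else (0, \<i>))"

text \<open>The standard basis e_0 = 1, e_1, ..., e_7 (meaningful for i < 8).\<close>
definition obasis :: "nat \<Rightarrow> oct" where
  "obasis i = (if i < 4 then (qbasis i, 0) else (0, qbasis (i - 4)))"

definition oone :: oct where "oone = obasis 0"

text \<open>L p x = p x (left multiplication), R x p = x p (right multiplication).\<close>

definition assocL :: "(oct \<Rightarrow> 'v::real_vector \<Rightarrow> 'v) \<Rightarrow> oct \<Rightarrow> oct \<Rightarrow> 'v \<Rightarrow> 'v" where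
  "assocL L p q x = L (omul p q) x - L p (L q x)"

definition assocM :: "(oct \<Rightarrow> 'v::real_vector \<Rightarrow> 'v) \<Rightarrow> ('v \<Rightarrow> oct \<Rightarrow> 'v) \<Rightarrow> oct \<Rightarrow> 'v \<Rightarrow> oct \<Rightarrow> 'v" where
  "assocM L R p x q = R (L p x) q - L p (R x q)"

definition assocR :: "('v::real_vector \<Rightarrow> oct \<Rightarrow> 'v) \<Rightarrow> 'v \<Rightarrow> oct \<Rightarrow> oct \<Rightarrow> 'v" where
  "assocR R x p q = R (R x p) q - R x (omul p q)"

definition oct_bimodule :: "(oct \<Rightarrow> 'v::real_vector \<Rightarrow> 'v) \<Rightarrow> ('v \<Rightarrow> oct \<Rightarrow> 'v) \<Rightarrow> bool" where
  "oct_bimodule L R \<longleftrightarrow>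
     (\<forall>p. linear (L p)) \<and> (\<forall>x. linear (\<lambda>p. L p x)) \<and>
     (\<forall>p. linear (\<lambda>x. R x p)) \<and> (\<forall>x. linear (R x)) \<and>
     (\<forall>x. L oone x = x \<and> R x oone = x) \<and>
     (\<forall>p q x. assocL L p q x = assocM L R q x p \<and>
              assocM L R q x p = assocR R x p q \<and>
              assocL L p q x = - assocL L q p x)"

definition banach_oct_bimodule :: "(oct \<Rightarrow> 'v::real_normed_vector \<Rightarrow> 'v) \<Rightarrow> ('v \<Rightarrow> oct \<Rightarrow> 'v) \<Rightarrow> bool" where
  "banach_oct_bimodule L R \<longleftrightarrow> oct_bimodule L R \<and>
     (\<forall>p x. norm (L p x) = norm p * norm x \<and> norm (R x p) = norm p * norm x)"

definition ReM :: "(oct \<Rightarrow> 'v::real_vector \<Rightarrow> 'v) \<Rightarrow> ('v \<Rightarrow> oct \<Rightarrow> 'v) \<Rightarrow> 'v set" where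
  "ReM L R = {m. (\<forall>p. L p m = R m p) \<and> (\<forall>p q. assocL L p q m = 0)}"

text \<open>Real coordinates: x = sum_{i<8} e_i x_i with x_i in Re M (unique).\<close>
definition re_coords :: "(oct \<Rightarrow> 'v::real_vector \<Rightarrow> 'v) \<Rightarrow> ('v \<Rightarrow> oct \<Rightarrow> 'v) \<Rightarrow> 'v \<Rightarrow> nat \<Rightarrow> 'v" where
  "re_coords L R x = (THE c. (\<forall>i<8. c i \<in> ReM L R) \<and> (\<forall>i\<ge>8. c i = 0) \<and>
                        x = (\<Sum>i<8. L (obasis i) (c i)))"

definition ReV :: "(oct \<Rightarrow> 'v::real_vector \<Rightarrow> 'v) \<Rightarrow> ('v \<Rightarrow> oct \<Rightarrow> 'v) \<Rightarrow> 'v \<Rightarrow> 'v" where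
  "ReV L R x = re_coords L R x 0"

definition Bp :: "('v::real_vector \<Rightarrow> oct \<Rightarrow> 'v) \<Rightarrow> ('v \<Rightarrow> 'v) \<Rightarrow> oct \<Rightarrow> 'v \<Rightarrow> 'v" where
  "Bp R f p x = R (f x) p - f (R x p)"

definition right_para_linear :: "(oct \<Rightarrow> 'v::real_vector \<Rightarrow> 'v) \<Rightarrow> ('v \<Rightarrow> oct \<Rightarrow> 'v) \<Rightarrow> ('v \<Rightarrow> 'v) \<Rightarrow> bool" where
  "right_para_linear L R f \<longleftrightarrow> linear f \<and> (\<forall>p x. ReV L R (Bp R f p x) = 0)"

definition B_RO :: "(oct \<Rightarrow> 'v::real_normed_vector \<Rightarrow> 'v) \<Rightarrow> ('v \<Rightarrow> oct \<Rightarrow> 'v) \<Rightarrow> ('v \<Rightarrow> 'v) set" where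
  "B_RO L R = {f. bounded_linear f \<and> right_para_linear L R f}"

definition oext :: "(oct \<Rightarrow> 'v::real_vector \<Rightarrow> 'v) \<Rightarrow> ('v \<Rightarrow> oct \<Rightarrow> 'v) \<Rightarrow> ('v \<Rightarrow> 'v) \<Rightarrow> 'v \<Rightarrow> 'v" where
  "oext L R h x = (\<Sum>i<8. R (h (re_coords L R x i)) (obasis i))"

definition olif :: "(oct \<Rightarrow> 'v::real_vector \<Rightarrow> 'v) \<Rightarrow> ('v \<Rightarrow> oct \<Rightarrow> 'v) \<Rightarrow> ('v \<Rightarrow> 'v) \<Rightarrow> 'v \<Rightarrow> 'v" where
  "olif L R h x = (\<Sum>i<8. R (h (R x (ocnj (obasis i)))) (obasis i))"

text \<open>f \<circledcirc> g = ext((f o g)|Re V).\<close>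
definition ocomp :: "(oct \<Rightarrow> 'v::real_vector \<Rightarrow> 'v) \<Rightarrow> ('v \<Rightarrow> oct \<Rightarrow> 'v) \<Rightarrow> ('v \<Rightarrow> 'v) \<Rightarrow> ('v \<Rightarrow> 'v) \<Rightarrow> 'v \<Rightarrow> 'v" where
  "ocomp L R f g = oext L R (f \<circ> g)"

definition oassoc :: "(oct \<Rightarrow> 'v::real_vector \<Rightarrow> 'v) \<Rightarrow> ('v \<Rightarrow> oct \<Rightarrow> 'v) \<Rightarrow> ('v \<Rightarrow> 'v) \<Rightarrow> ('v \<Rightarrow> 'v) \<Rightarrow> 'v \<Rightarrow> 'v" where
  "oassoc L R f g x = ocomp L R f g x - f (g x)"

text \<open>T^{\<circledcirc> n} = ext(T^n|Re V) and T^{n \<circledcirc>} = lif(Re o T^n).\<close>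
definition pow_ext :: "(oct \<Rightarrow> 'v::real_vector \<Rightarrow> 'v) \<Rightarrow> ('v \<Rightarrow> oct \<Rightarrow> 'v) \<Rightarrow> ('v \<Rightarrow> 'v) \<Rightarrow> nat \<Rightarrow> 'v \<Rightarrow> 'v" where
  "pow_ext L R T n = oext L R (T ^^ n)"

definition pow_lif :: "(oct \<Rightarrow> 'v::real_vector \<Rightarrow> 'v) \<Rightarrow> ('v \<Rightarrow> oct \<Rightarrow> 'v) \<Rightarrow> ('v \<Rightarrow> 'v) \<Rightarrow> nat \<Rightarrow> 'v \<Rightarrow> 'v" where
  "pow_lif L R T n = olif L R (ReV L R \<circ> (T ^^ n))"

end

theory Submission
  imports Defs
begin

definition ttab :: "nat list list" where
 "ttab = [[0,1,2,3,4,5,6,7],[1,0,3,2,5,4,7,6],[2,3,0,1,6,7,4,5],[3,2,1,0,7,6,5,4],[4,5,6,7,0,1,2,3],[5,4,7,6,1,0,3,2],[6,7,4,5,2,3,0,1],[7,6,5,4,3,2,1,0]]"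
definition stab :: "int list list" where
 "stab = [[1,1,1,1,1,1,1,1],[1,-1,1,-1,1,-1,-1,1],[1,-1,-1,1,1,1,-1,-1],[1,1,-1,-1,1,-1,1,-1],[1,-1,-1,-1,-1,1,1,1],[1,1,-1,1,-1,-1,-1,1],[1,1,1,-1,-1,1,-1,-1],[1,-1,1,1,-1,-1,1,-1]]"

definition tt :: "nat \<Rightarrow> nat \<Rightarrow> nat" where "tt a b = ttab ! a ! b"
definition ts :: "nat \<Rightarrow> nat \<Rightarrow> int" where "ts a b = stab ! a ! b"

lemma less8: "(a::nat) < 8 \<longleftrightarrow> a = 0 \<or> a = 1 \<or> a = 2 \<or> a = 3 \<or> a = 4 \<or> a = 5 \<or> a = 6 \<or> a = 7"
  by auto

lemma qmul_pair: "qmul (a,b) (c,d) = (a * c - cnj d * b, d * a + b * cnj c)" by (simp add: qmul_def)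
lemma omul_pair: "omul (a,b) (c,d) = (qmul a c - qmul (qcnj d) b, qmul d a + qmul b (qcnj c))" by (simp add: omul_def)

lemma ob_0_0: "omul (obasis 0) (obasis 0) = obasis 0"
  by (simp add: omul_pair qmul_pair obasis_def qbasis_def qcnj_def zero_prod_def)
lemma ob_0_1: "omul (obasis 0) (obasis 1) = obasis 1"
  by (simp add: omul_pair qmul_pair obasis_def qbasis_def qcnj_def zero_prod_def)
lemma ob_0_2: "omul (obasis 0) (obasis 2) = obasis 2"
  by (simp add: omul_pair qmul_pair obasis_def qbasis_def qcnj_def zero_prod_def)
lemma ob_0_3: "omul (obasis 0) (obasis 3) = obasis 3"
  by (simp add: omul_pair qmul_pair obasis_def qbasis_def qcnj_def zero_prod_def)
lemma ob_0_4: "omul (obasis 0) (obasis 4) = obasis 4"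
  by (simp add: omul_pair qmul_pair obasis_def qbasis_def qcnj_def zero_prod_def)
lemma ob_0_5: "omul (obasis 0) (obasis 5) = obasis 5"
  by (simp add: omul_pair qmul_pair obasis_def qbasis_def qcnj_def zero_prod_def)
lemma ob_0_6: "omul (obasis 0) (obasis 6) = obasis 6"
  by (simp add: omul_pair qmul_pair obasis_def qbasis_def qcnj_def zero_prod_def)
lemma ob_0_7: "omul (obasis 0) (obasis 7) = obasis 7"
  by (simp add: omul_pair qmul_pair obasis_def qbasis_def qcnj_def zero_prod_def)
lemma ob_1_0: "omul (obasis 1) (obasis 0) = obasis 1"
  by (simp add: omul_pair qmul_pair obasis_def qbasis_def qcnj_def zero_prod_def)
lemma ob_1_1: "omul (obasis 1) (obasis 1) = - obasis 0"
  by (simp add: omul_pair qmul_pair obasis_def qbasis_def qcnj_def zero_prod_def)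
lemma ob_1_2: "omul (obasis 1) (obasis 2) = obasis 3"
  by (simp add: omul_pair qmul_pair obasis_def qbasis_def qcnj_def zero_prod_def)
lemma ob_1_3: "omul (obasis 1) (obasis 3) = - obasis 2"
  by (simp add: omul_pair qmul_pair obasis_def qbasis_def qcnj_def zero_prod_def)
lemma ob_1_4: "omul (obasis 1) (obasis 4) = obasis 5"
  by (simp add: omul_pair qmul_pair obasis_def qbasis_def qcnj_def zero_prod_def)
lemma ob_1_5: "omul (obasis 1) (obasis 5) = - obasis 4"
  by (simp add: omul_pair qmul_pair obasis_def qbasis_def qcnj_def zero_prod_def)
lemma ob_1_6: "omul (obasis 1) (obasis 6) = - obasis 7"
  by (simp add: omul_pair qmul_pair obasis_def qbasis_def qcnj_def zero_prod_def)
lemma ob_1_7: "omul (obasis 1) (obasis 7) = obasis 6"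
  by (simp add: omul_pair qmul_pair obasis_def qbasis_def qcnj_def zero_prod_def)
lemma ob_2_0: "omul (obasis 2) (obasis 0) = obasis 2"
  by (simp add: omul_pair qmul_pair obasis_def qbasis_def qcnj_def zero_prod_def)
lemma ob_2_1: "omul (obasis 2) (obasis 1) = - obasis 3"
  by (simp add: omul_pair qmul_pair obasis_def qbasis_def qcnj_def zero_prod_def)
lemma ob_2_2: "omul (obasis 2) (obasis 2) = - obasis 0"
  by (simp add: omul_pair qmul_pair obasis_def qbasis_def qcnj_def zero_prod_def)
lemma ob_2_3: "omul (obasis 2) (obasis 3) = obasis 1"
  by (simp add: omul_pair qmul_pair obasis_def qbasis_def qcnj_def zero_prod_def)
lemma ob_2_4: "omul (obasis 2) (obasis 4) = obasis 6"
  by (simp add: omul_pair qmul_pair obasis_def qbasis_def qcnj_def zero_prod_def)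
lemma ob_2_5: "omul (obasis 2) (obasis 5) = obasis 7"
  by (simp add: omul_pair qmul_pair obasis_def qbasis_def qcnj_def zero_prod_def)
lemma ob_2_6: "omul (obasis 2) (obasis 6) = - obasis 4"
  by (simp add: omul_pair qmul_pair obasis_def qbasis_def qcnj_def zero_prod_def)
lemma ob_2_7: "omul (obasis 2) (obasis 7) = - obasis 5"
  by (simp add: omul_pair qmul_pair obasis_def qbasis_def qcnj_def zero_prod_def)
lemma ob_3_0: "omul (obasis 3) (obasis 0) = obasis 3"
  by (simp add: omul_pair qmul_pair obasis_def qbasis_def qcnj_def zero_prod_def)
lemma ob_3_1: "omul (obasis 3) (obasis 1) = obasis 2"
  by (simp add: omul_pair qmul_pair obasis_def qbasis_def qcnj_def zero_prod_def)
lemma ob_3_2: "omul (obasis 3) (obasis 2) = - obasis 1"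
  by (simp add: omul_pair qmul_pair obasis_def qbasis_def qcnj_def zero_prod_def)
lemma ob_3_3: "omul (obasis 3) (obasis 3) = - obasis 0"
  by (simp add: omul_pair qmul_pair obasis_def qbasis_def qcnj_def zero_prod_def)
lemma ob_3_4: "omul (obasis 3) (obasis 4) = obasis 7"
  by (simp add: omul_pair qmul_pair obasis_def qbasis_def qcnj_def zero_prod_def)
lemma ob_3_5: "omul (obasis 3) (obasis 5) = - obasis 6"
  by (simp add: omul_pair qmul_pair obasis_def qbasis_def qcnj_def zero_prod_def)
lemma ob_3_6: "omul (obasis 3) (obasis 6) = obasis 5"
  by (simp add: omul_pair qmul_pair obasis_def qbasis_def qcnj_def zero_prod_def)
lemma ob_3_7: "omul (obasis 3) (obasis 7) = - obasis 4"
  by (simp add: omul_pair qmul_pair obasis_def qbasis_def qcnj_def zero_prod_def)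
lemma ob_4_0: "omul (obasis 4) (obasis 0) = obasis 4"
  by (simp add: omul_pair qmul_pair obasis_def qbasis_def qcnj_def zero_prod_def)
lemma ob_4_1: "omul (obasis 4) (obasis 1) = - obasis 5"
  by (simp add: omul_pair qmul_pair obasis_def qbasis_def qcnj_def zero_prod_def)
lemma ob_4_2: "omul (obasis 4) (obasis 2) = - obasis 6"
  by (simp add: omul_pair qmul_pair obasis_def qbasis_def qcnj_def zero_prod_def)
lemma ob_4_3: "omul (obasis 4) (obasis 3) = - obasis 7"
  by (simp add: omul_pair qmul_pair obasis_def qbasis_def qcnj_def zero_prod_def)
lemma ob_4_4: "omul (obasis 4) (obasis 4) = - obasis 0"
  by (simp add: omul_pair qmul_pair obasis_def qbasis_def qcnj_def zero_prod_def)
lemma ob_4_5: "omul (obasis 4) (obasis 5) = obasis 1"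
  by (simp add: omul_pair qmul_pair obasis_def qbasis_def qcnj_def zero_prod_def)
lemma ob_4_6: "omul (obasis 4) (obasis 6) = obasis 2"
  by (simp add: omul_pair qmul_pair obasis_def qbasis_def qcnj_def zero_prod_def)
lemma ob_4_7: "omul (obasis 4) (obasis 7) = obasis 3"
  by (simp add: omul_pair qmul_pair obasis_def qbasis_def qcnj_def zero_prod_def)
lemma ob_5_0: "omul (obasis 5) (obasis 0) = obasis 5"
  by (simp add: omul_pair qmul_pair obasis_def qbasis_def qcnj_def zero_prod_def)
lemma ob_5_1: "omul (obasis 5) (obasis 1) = obasis 4"
  by (simp add: omul_pair qmul_pair obasis_def qbasis_def qcnj_def zero_prod_def)
lemma ob_5_2: "omul (obasis 5) (obasis 2) = - obasis 7"
  by (simp add: omul_pair qmul_pair obasis_def qbasis_def qcnj_def zero_prod_def)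
lemma ob_5_3: "omul (obasis 5) (obasis 3) = obasis 6"
  by (simp add: omul_pair qmul_pair obasis_def qbasis_def qcnj_def zero_prod_def)
lemma ob_5_4: "omul (obasis 5) (obasis 4) = - obasis 1"
  by (simp add: omul_pair qmul_pair obasis_def qbasis_def qcnj_def zero_prod_def)
lemma ob_5_5: "omul (obasis 5) (obasis 5) = - obasis 0"
  by (simp add: omul_pair qmul_pair obasis_def qbasis_def qcnj_def zero_prod_def)
lemma ob_5_6: "omul (obasis 5) (obasis 6) = - obasis 3"
  by (simp add: omul_pair qmul_pair obasis_def qbasis_def qcnj_def zero_prod_def)
lemma ob_5_7: "omul (obasis 5) (obasis 7) = obasis 2"
  by (simp add: omul_pair qmul_pair obasis_def qbasis_def qcnj_def zero_prod_def)
lemma ob_6_0: "omul (obasis 6) (obasis 0) = obasis 6"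
  by (simp add: omul_pair qmul_pair obasis_def qbasis_def qcnj_def zero_prod_def)
lemma ob_6_1: "omul (obasis 6) (obasis 1) = obasis 7"
  by (simp add: omul_pair qmul_pair obasis_def qbasis_def qcnj_def zero_prod_def)
lemma ob_6_2: "omul (obasis 6) (obasis 2) = obasis 4"
  by (simp add: omul_pair qmul_pair obasis_def qbasis_def qcnj_def zero_prod_def)
lemma ob_6_3: "omul (obasis 6) (obasis 3) = - obasis 5"
  by (simp add: omul_pair qmul_pair obasis_def qbasis_def qcnj_def zero_prod_def)
lemma ob_6_4: "omul (obasis 6) (obasis 4) = - obasis 2"
  by (simp add: omul_pair qmul_pair obasis_def qbasis_def qcnj_def zero_prod_def)
lemma ob_6_5: "omul (obasis 6) (obasis 5) = obasis 3"
  by (simp add: omul_pair qmul_pair obasis_def qbasis_def qcnj_def zero_prod_def)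
lemma ob_6_6: "omul (obasis 6) (obasis 6) = - obasis 0"
  by (simp add: omul_pair qmul_pair obasis_def qbasis_def qcnj_def zero_prod_def)
lemma ob_6_7: "omul (obasis 6) (obasis 7) = - obasis 1"
  by (simp add: omul_pair qmul_pair obasis_def qbasis_def qcnj_def zero_prod_def)
lemma ob_7_0: "omul (obasis 7) (obasis 0) = obasis 7"
  by (simp add: omul_pair qmul_pair obasis_def qbasis_def qcnj_def zero_prod_def)
lemma ob_7_1: "omul (obasis 7) (obasis 1) = - obasis 6"
  by (simp add: omul_pair qmul_pair obasis_def qbasis_def qcnj_def zero_prod_def)
lemma ob_7_2: "omul (obasis 7) (obasis 2) = obasis 5"
  by (simp add: omul_pair qmul_pair obasis_def qbasis_def qcnj_def zero_prod_def)
lemma ob_7_3: "omul (obasis 7) (obasis 3) = obasis 4"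
  by (simp add: omul_pair qmul_pair obasis_def qbasis_def qcnj_def zero_prod_def)
lemma ob_7_4: "omul (obasis 7) (obasis 4) = - obasis 3"
  by (simp add: omul_pair qmul_pair obasis_def qbasis_def qcnj_def zero_prod_def)
lemma ob_7_5: "omul (obasis 7) (obasis 5) = - obasis 2"
  by (simp add: omul_pair qmul_pair obasis_def qbasis_def qcnj_def zero_prod_def)
lemma ob_7_6: "omul (obasis 7) (obasis 6) = obasis 1"
  by (simp add: omul_pair qmul_pair obasis_def qbasis_def qcnj_def zero_prod_def)
lemma ob_7_7: "omul (obasis 7) (obasis 7) = - obasis 0"
  by (simp add: omul_pair qmul_pair obasis_def qbasis_def qcnj_def zero_prod_def)

lemmas ob_table = ob_0_0 ob_0_1 ob_0_2 ob_0_3 ob_0_4 ob_0_5 ob_0_6 ob_0_7 ob_1_0 ob_1_1 ob_1_2 ob_1_3 ob_1_4 ob_1_5 ob_1_6 ob_1_7 ob_2_0 ob_2_1 ob_2_2 ob_2_3 ob_2_4 ob_2_5 ob_2_6 ob_2_7 ob_3_0 ob_3_1 ob_3_2 ob_3_3 ob_3_4 ob_3_5 ob_3_6 ob_3_7 ob_4_0 ob_4_1 ob_4_2 ob_4_3 ob_4_4 ob_4_5 ob_4_6 ob_4_7 ob_5_0 ob_5_1 ob_5_2 ob_5_3 ob_5_4 ob_5_5 ob_5_6 ob_5_7 ob_6_0 ob_6_1 ob_6_2 ob_6_3 ob_6_4 ob_6_5 ob_6_6 ob_6_7 ob_7_0 ob_7_1 ob_7_2 ob_7_3 ob_7_4 ob_7_5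 ob_7_6 ob_7_7

lemma all8: "(\<forall>a::nat<8. P a) = (P 0 \<and> P 1 \<and> P 2 \<and> P 3 \<and> P 4 \<and> P 5 \<and> P 6 \<and> P 7)"
  unfolding less8 by blast

lemma omul_basis_all: "\<forall>a<8. \<forall>b<8. omul (obasis a) (obasis b) = of_int (ts a b) *\<^sub>R obasis (tt a b)"
  unfolding all8 by (simp add: ob_table tt_def ts_def ttab_def stab_def del: One_nat_def add: One_nat_def[symmetric])

lemma omul_basis: "a < 8 \<Longrightarrow> b < 8 \<Longrightarrow> omul (obasis a) (obasis b) = of_int (ts a b) *\<^sub>R obasis (tt a b)"
  using omul_basis_all by blast

definition lt :: "(oct \<Rightarrow> 'v::real_vector \<Rightarrow> 'v) \<Rightarrow> ('v \<Rightarrow> oct \<Rightarrow> 'v) \<Rightarrow> nat \<Rightarrow> 'v \<Rightarrow> 'v" where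
  "lt L R a y = (if a \<le> 7 then L (obasis a) y else R y (obasis (a - 7)))"

primrec ev :: "(oct \<Rightarrow> 'v::real_vector \<Rightarrow> 'v) \<Rightarrow> ('v \<Rightarrow> oct \<Rightarrow> 'v) \<Rightarrow> nat list \<Rightarrow> 'v \<Rightarrow> 'v" where
  "ev L R [] y = y"
| "ev L R (a # w) y = lt L R a (ev L R w y)"

type_synonym poly = "(int \<times> nat list) list"

definition evp :: "(oct \<Rightarrow> 'v::real_vector \<Rightarrow> 'v) \<Rightarrow> ('v \<Rightarrow> oct \<Rightarrow> 'v) \<Rightarrow> poly \<Rightarrow> 'v \<Rightarrow> 'v" where
  "evp L R p y = (\<Sum>(c,w)\<leftarrow>p. of_int c *\<^sub>R ev L R w y)"

lemma evp_Nil[simp]: "evp L R [] y = 0" by (simp add: evp_def)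
lemma evp_Cons[simp]: "evp L R ((c,w)#p) y = of_int c *\<^sub>R ev L R w y + evp L R p y" by (simp add: evp_def)
lemma evp_append[simp]: "evp L R (p @ q) y = evp L R p y + evp L R q y" by (simp add: evp_def)

lemma ev_append: "ev L R (u @ v) y = ev L R u (ev L R v y)" by (induct u) auto

definition smul :: "int \<Rightarrow> poly \<Rightarrow> poly" where
  "smul m p = map (\<lambda>(c,w). (m * c, w)) p"
definition pre :: "nat list \<Rightarrow> poly \<Rightarrow> poly" where
  "pre u p = map (\<lambda>(c,w). (c, u @ w)) p"
definition post :: "nat list \<Rightarrow> poly \<Rightarrow> poly" where
  "post v p = map (\<lambda>(c,w). (c, w @ v)) p"

lemma evp_smul[simp]: "evp L R (smul m p) y = of_int m *\<^sub>R evp L R p y"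
  by (induct p) (auto simp: smul_def scaleR_add_right)

lemma evp_post: "evp L R (post v p) y = evp L R p (ev L R v y)"
  by (induct p) (auto simp: post_def ev_append)

fun wle :: "nat list \<Rightarrow> nat list \<Rightarrow> bool" where
  "wle [] v = True"
| "wle (a#u) [] = False"
| "wle (a#u) (b#v) = (a < b \<or> (a = b \<and> wle u v))"

fun merge :: "poly \<Rightarrow> poly \<Rightarrow> poly" where
  "merge [] q = q"
| "merge p [] = p"
| "merge (x#p) (y#q) = (if wle (snd x) (snd y) then x # merge p (y#q) else y # merge (x#p) q)"

lemma evp_merge: "evp L R (merge p q) y = evp L R p y + evp L R q y"
  by (induct p q rule: merge.induct) (auto simp: algebra_simps)

fun pairs :: "poly list \<Rightarrow> poly list" where
  "pairs (a#b#r) = merge a b # pairs r"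
| "pairs r = r"

lemma pairs_len: "length (pairs l) \<le> length l"
  by (induct l rule: pairs.induct) auto
lemma pairs_len2: "length l \<ge> 2 \<Longrightarrow> length (pairs l) < length l"
  by (induct l rule: pairs.induct) (auto simp: le_Suc_eq intro: le_less_trans[OF pairs_len])

function mergeall :: "poly list \<Rightarrow> poly" where
  "mergeall [] = []"
| "mergeall [p] = p"
| "mergeall (a#b#r) = mergeall (pairs (a#b#r))"
  by pat_completeness auto
termination
  by (relation "Wellfounded.measure length") (auto intro: le_imp_less_Suc pairs_len)

lemma evp_pairs: "(\<Sum>p\<leftarrow>pairs l. evp L R p y) = (\<Sum>p\<leftarrow>l. evp L R p y)"
  by (induct l rule: pairs.induct) (auto simp: evp_merge algebra_simps)

lemma evp_mergeall: "evp L R (mergeall l) y = (\<Sum>p\<leftarrow>l. evp L R p y)"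
proof (induct l rule: mergeall.induct)
  case (3 a b r)
  then show ?case by (simp del: pairs.simps add: evp_pairs)
qed auto

fun coll :: "poly \<Rightarrow> poly" where
  "coll [] = []"
| "coll [(c,w)] = (if c = 0 then [] else [(c,w)])"
| "coll ((c,w)#(d,v)#r) = (if w = v then coll ((c+d,w)#r)
      else if c = 0 then coll ((d,v)#r) else (c,w) # coll ((d,v)#r))"

lemma evp_coll: "evp L R (coll p) y = evp L R p y"
  by (induct p rule: coll.induct) (auto simp: algebra_simps)

definition nrm :: "poly \<Rightarrow> poly" where
  "nrm p = coll (mergeall (map (\<lambda>x. [x]) p))"

lemma evp_nrm: "evp L R (nrm p) y = evp L R p y"
proof -
  have "(\<Sum>q\<leftarrow>map (\<lambda>x. [x]) p. evp L R q y) = evp L R p y"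
    by (induct p) auto
  then show ?thesis by (simp add: nrm_def evp_coll evp_mergeall)
qed

definition lw :: "nat \<Rightarrow> nat list" where "lw a = (if a = 0 then [] else [a])"
definition rw :: "nat \<Rightarrow> nat list" where "rw a = (if a = 0 then [] else [a + 7])"

definition AL :: "nat \<Rightarrow> nat \<Rightarrow> poly" where
  "AL a b = [(ts a b, lw (tt a b)), (-1, lw a @ lw b)]"
definition AM :: "nat \<Rightarrow> nat \<Rightarrow> poly" where
  "AM b a = [(1, rw a @ lw b), (-1, lw b @ rw a)]"
definition AR :: "nat \<Rightarrow> nat \<Rightarrow> poly" where
  "AR a b = [(1, rw b @ rw a), (- ts a b, rw (tt a b))]"

definition relp :: "nat \<Rightarrow> nat \<Rightarrow> nat \<Rightarrow> poly" where
  "relp k a b = (if k = 0 then AL a b @ smul (-1) (AM b a)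
     else if k = 1 then AM b a @ smul (-1) (AR a b) else AL a b @ AL b a)"

type_synonym cert = "(int \<times> nat list \<times> nat \<times> nat \<times> nat \<times> nat list) list"

definition gen :: "int \<times> nat list \<times> nat \<times> nat \<times> nat \<times> nat list \<Rightarrow> poly" where
  "gen g = (case g of (c,u,k,a,b,v) \<Rightarrow> smul c (pre u (post v (relp k a b))))"

definition cgood :: "cert \<Rightarrow> bool" where
  "cgood G = list_all (\<lambda>(c,u,k,a,b,v). a < 8 \<and> b < 8) G"

locale ob =
  fixes L :: "oct \<Rightarrow> 'v::real_vector \<Rightarrow> 'v" and R :: "'v \<Rightarrow> oct \<Rightarrow> 'v"
  assumes bim: "oct_bimodule L R"
begin

lemma linL: "linear (L p)" using bim unfolding oct_bimodule_def by blast
lemma linL2: "linear (\<lambda>p. L p x)" using bim unfolding oct_bimodule_def by blast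
lemma linR: "linear (\<lambda>x. R x p)" using bim unfolding oct_bimodule_def by blast
lemma linR2: "linear (R x)" using bim unfolding oct_bimodule_def by blast
lemma L1: "L oone x = x" using bim unfolding oct_bimodule_def by blast
lemma R1: "R x oone = x" using bim unfolding oct_bimodule_def by blast
lemma ax1: "assocL L p q x = assocM L R q x p" using bim unfolding oct_bimodule_def by blast
lemma ax2: "assocM L R q x p = assocR R x p q" using bim unfolding oct_bimodule_def by blast
lemma ax3: "assocL L p q x = - assocL L q p x" using bim unfolding oct_bimodule_def by blast

lemma L_add: "L p (x + y) = L p x + L p y" using linL linear_add by blast
lemma L_diff: "L p (x - y) = L p x - L p y" using linL linear_diff by blast
lemma L_scale: "L p (c *\<^sub>R x) = c *\<^sub>R L p x" using linL linear_scale by blast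
lemma L_neg: "L p (- x) = - L p x" using linL linear_neg by blast
lemma L_zero: "L p 0 = 0" using linL linear_0 by blast
lemma R_add: "R (x + y) p = R x p + R y p" using linR linear_add by blast
lemma R_diff: "R (x - y) p = R x p - R y p" using linR linear_diff by blast
lemma R_scale: "R (c *\<^sub>R x) p = c *\<^sub>R R x p" using linR linear_scale by blast
lemma R_neg: "R (- x) p = - R x p" using linR linear_neg by blast
lemma R_zero: "R 0 p = 0" using linR linear_0 by blast
lemma L_add2: "L (p + q) x = L p x + L q x" using linL2 linear_add by blast
lemma L_diff2: "L (p - q) x = L p x - L q x" using linL2 linear_diff by blast
lemma L_scale2: "L (c *\<^sub>R p) x = c *\<^sub>R L p x" using linL2 linear_scale by blast
lemma L_neg2: "L (- p) x = - L p x" using linL2 linear_neg by blast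
lemma L_zero2: "L 0 x = 0" using linL2 linear_0 by blast
lemma R_add2: "R x (p + q) = R x p + R x q" using linR2 linear_add by blast
lemma R_diff2: "R x (p - q) = R x p - R x q" using linR2 linear_diff by blast
lemma R_scale2: "R x (c *\<^sub>R p) = c *\<^sub>R R x p" using linR2 linear_scale by blast
lemma R_neg2: "R x (- p) = - R x p" using linR2 linear_neg by blast
lemma R_zero2: "R x 0 = 0" using linR2 linear_0 by blast

lemmas lin_simps = L_add L_diff L_scale L_neg L_zero R_add R_diff R_scale R_neg R_zero
  L_add2 L_diff2 L_scale2 L_neg2 L_zero2 R_add2 R_diff2 R_scale2 R_neg2 R_zero2

lemma lt_linear: "linear (lt L R a)"
  unfolding lt_def using linL linR by (cases "a \<le> 7") auto

lemma ev_linear: "linear (ev L R w)"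
proof (induct w)
  case Nil then show ?case by (simp add: linear_id[unfolded id_def])
next
  case (Cons a w)
  have "ev L R (a # w) = lt L R a \<circ> ev L R w" by auto
  then show ?case using linear_compose[OF Cons lt_linear] by metis
qed

lemma ev_sum_list: "ev L R u (\<Sum>x\<leftarrow>xs. f x) = (\<Sum>x\<leftarrow>xs. ev L R u (f x))"
  by (induct xs) (auto simp: linear_add[OF ev_linear] linear_0[OF ev_linear])

lemma evp_pre: "evp L R (pre u p) y = ev L R u (evp L R p y)"
  by (induct p) (auto simp: pre_def ev_append linear_add[OF ev_linear] linear_0[OF ev_linear]
        linear_scale[OF ev_linear])

lemma ev_lw: "a < 8 \<Longrightarrow> ev L R (lw a) z = L (obasis a) z"
  by (auto simp: lw_def lt_def L1[unfolded oone_def])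
lemma ev_rw: "a < 8 \<Longrightarrow> ev L R (rw a) z = R z (obasis a)"
  by (auto simp: rw_def lt_def R1[unfolded oone_def])

lemma tt_less_all: "\<forall>a<8. \<forall>b<8. tt a b < 8"
  unfolding all8 by (simp add: tt_def ttab_def)
lemma tt_less: "a < 8 \<Longrightarrow> b < 8 \<Longrightarrow> tt a b < 8"
  using tt_less_all by blast

lemma evp_AL: "a < 8 \<Longrightarrow> b < 8 \<Longrightarrow> evp L R (AL a b) z = assocL L (obasis a) (obasis b) z"
  by (simp add: AL_def assocL_def ev_append ev_lw tt_less omul_basis L_scale2)
lemma evp_AM: "a < 8 \<Longrightarrow> b < 8 \<Longrightarrow> evp L R (AM b a) z = assocM L R (obasis b) z (obasis a)"
  by (simp add: AM_def assocM_def ev_append ev_lw ev_rw)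
lemma evp_AR: "a < 8 \<Longrightarrow> b < 8 \<Longrightarrow> evp L R (AR a b) z = assocR R z (obasis a) (obasis b)"
  by (simp add: AR_def assocR_def ev_append ev_rw tt_less omul_basis R_scale2)

lemma evp_relp: assumes "a < 8" "b < 8" shows "evp L R (relp k a b) z = 0"
proof -
  have "k = 0 \<or> k = 1 \<or> (k \<noteq> 0 \<and> k \<noteq> 1)" by auto
  moreover have "k = 0 \<Longrightarrow> ?thesis"
    using assms ax1[of "obasis a" "obasis b" z] by (simp add: relp_def evp_AL evp_AM)
  moreover have "k = 1 \<Longrightarrow> ?thesis"
    using assms ax2[of "obasis b" z "obasis a"] by (simp add: relp_def evp_AR evp_AM)
  moreover have "k \<noteq> 0 \<Longrightarrow> k \<noteq> 1 \<Longrightarrow> ?thesis"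
    using assms ax3[of "obasis a" "obasis b" z] by (simp add: relp_def evp_AL)
  ultimately show ?thesis by blast
qed

lemma evp_gen: "(case g of (c,u,k,a,b,v) \<Rightarrow> a < 8 \<and> b < 8) \<Longrightarrow> evp L R (gen g) z = 0"
  by (auto simp: gen_def evp_pre evp_post evp_relp linear_0[OF ev_linear] split: prod.splits)

lemma evp_cert0: "cgood G \<Longrightarrow> evp L R (concat (map gen G)) z = 0"
  by (induct G) (auto simp: cgood_def evp_gen)

lemma cert_thm:
  assumes "cgood G" "m \<noteq> 0" "nrm (smul m t @ smul (-1) (concat (map gen G))) = []"
  shows "evp L R t y = 0"
proof -
  have "evp L R (smul m t @ smul (-1) (concat (map gen G))) y = 0"
    using evp_nrm[of L R _ y] assms(3) by (metis evp_Nil)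
  then have "of_int m *\<^sub>R evp L R t y = 0" using evp_cert0[OF assms(1)] by simp
  then show ?thesis using assms(2) by simp
qed

end

section \<open>Clifford normalisation\<close>

fun ins :: "nat \<Rightarrow> nat list \<Rightarrow> int \<times> nat list" where
  "ins a [] = (1, [a])"
| "ins a (b # r) = (if 1 \<le> a \<and> a \<le> 7 \<and> 1 \<le> b \<and> b \<le> 7 then
      (if a < b then (1, a # b # r) else if a = b then (-1, r)
       else (case ins a r of (s, r') \<Rightarrow> (-s, b # r')))
    else (1, a # b # r))"

fun nfw :: "nat list \<Rightarrow> int \<times> nat list" where
  "nfw [] = (1, [])"
| "nfw (a # w) = (case nfw w of (s, w') \<Rightarrow> case ins a w' of (s2, w'') \<Rightarrow> (s * s2, w''))"

definition nfp :: "poly \<Rightarrow> poly" where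
  "nfp p = map (\<lambda>x. (case nfw (snd x) of (s,w') \<Rightarrow> (fst x * s, w'))) p"

lemma anticomm_all: "\<forall>a<8. \<forall>b<8. 0 < a \<longrightarrow> 0 < b \<longrightarrow>
   omul (obasis a) (obasis b) + omul (obasis b) (obasis a) = (if a = b then - obasis 0 - obasis 0 else 0)"
  unfolding all8 by (simp add: ob_table del: One_nat_def add: One_nat_def[symmetric])

lemma dbl: "(x::'a::real_vector) + x = - y - y \<Longrightarrow> x = - y"
proof -
  assume "x + x = - y - y"
  then have "2 *\<^sub>R x = 2 *\<^sub>R (- y)" by (simp add: scaleR_2)
  then have "2 *\<^sub>R (x + y) = 0" by (simp add: scaleR_right_distrib)
  then have "x + y = 0" by simp
  then show ?thesis by (simp add: eq_neg_iff_add_eq_0)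
qed

context ob
begin

lemma cliff: assumes "1 \<le> a" "a \<le> 7" "1 \<le> b" "b \<le> 7"
  shows "L (obasis a) (L (obasis b) y) + L (obasis b) (L (obasis a) y) = (if a = b then - y - y else 0)"
proof -
  have "assocL L (obasis a) (obasis b) y = - assocL L (obasis b) (obasis a) y" by (rule ax3)
  then have "L (obasis a) (L (obasis b) y) + L (obasis b) (L (obasis a) y) =
      L (omul (obasis a) (obasis b) + omul (obasis b) (obasis a)) y"
    by (simp add: assocL_def L_add2 algebra_simps)
  also have "\<dots> = (if a = b then - y - y else 0)"
  proof -
    have e: "omul (obasis a) (obasis b) + omul (obasis b) (obasis a) = (if a = b then - obasis 0 - obasis 0 else 0)"
      using anticomm_all assms by auto
    have "L (- obasis 0 - obasis 0) y = - y - y"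
      by (simp only: L_diff2 L_neg2 L1[unfolded oone_def])
    then show ?thesis unfolding e by (auto simp: L_zero2)
  qed
  finally show ?thesis .
qed

lemma lt_L: "a \<le> 7 \<Longrightarrow> lt L R a y = L (obasis a) y" by (simp add: lt_def)

lemma lt_scale: "lt L R a (c *\<^sub>R y) = c *\<^sub>R lt L R a y"
  using linear_scale[OF lt_linear] by blast

lemma ins_sound: "ins a r = (s, r') \<Longrightarrow> lt L R a (ev L R r y) = of_int s *\<^sub>R ev L R r' y"
proof (induct r arbitrary: s r')
  case Nil then show ?case by auto
next
  case (Cons b r)
  show ?case
  proof (cases "1 \<le> a \<and> a \<le> 7 \<and> 1 \<le> b \<and> b \<le> 7")
    case True
    note ab = this
    show ?thesis
    proof (cases "a < b")
      case True then show ?thesis using Cons.prems ab by auto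
    next
      case False
      show ?thesis
      proof (cases "a = b")
        case True
        have "L (obasis a) (L (obasis a) (ev L R r y)) = - ev L R r y"
          using cliff[of a a "ev L R r y"] ab dbl by (simp add: True)
        then show ?thesis using Cons.prems ab True by (auto simp: lt_L)
      next
        case False2: False
        obtain s0 r0 where i: "ins a r = (s0, r0)" by (cases "ins a r") auto
        then have e: "s = - s0" "r' = b # r0" using Cons.prems ab False False2 by auto
        have "lt L R a (ev L R (b # r) y) = L (obasis a) (L (obasis b) (ev L R r y))"
          using ab by (simp add: lt_L)
        also have "\<dots> = - L (obasis b) (L (obasis a) (ev L R r y))"
          using cliff[of a b "ev L R r y"] ab False2 by (simp add: eq_neg_iff_add_eq_0)
        also have "L (obasis a) (ev L R r y) = of_int s0 *\<^sub>R ev L R r0 y"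
          using Cons.hyps[OF i] ab by (simp add: lt_L)
        finally show ?thesis using e ab by (simp add: lt_L L_scale)
      qed
    qed
  next
    case False then show ?thesis using Cons.prems by auto
  qed
qed

lemma nfw_sound: "nfw w = (s, w') \<Longrightarrow> ev L R w y = of_int s *\<^sub>R ev L R w' y"
proof (induct w arbitrary: s w')
  case Nil then show ?case by auto
next
  case (Cons a w)
  obtain s1 w1 where n: "nfw w = (s1, w1)" by (cases "nfw w") auto
  obtain s2 w2 where i: "ins a w1 = (s2, w2)" by (cases "ins a w1") auto
  have e: "s = s1 * s2" "w' = w2" using Cons.prems n i by auto
  have "ev L R (a # w) y = lt L R a (of_int s1 *\<^sub>R ev L R w1 y)" using Cons.hyps[OF n] by simp
  also have "\<dots> = of_int s1 *\<^sub>R (of_int s2 *\<^sub>R ev L R w2 y)" using ins_sound[OF i] by (simp add: lt_scale)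
  finally show ?case using e by simp
qed

lemma evp_nfp: "evp L R (nfp p) y = evp L R p y"
proof (induct p)
  case Nil then show ?case by (simp add: nfp_def)
next
  case (Cons x p)
  obtain c w where x: "x = (c, w)" by (cases x) auto
  obtain s w' where n: "nfw w = (s, w')" by (cases "nfw w") auto
  show ?case using Cons nfw_sound[OF n, of y] by (simp add: nfp_def x n)
qed

lemma cert_thm0:
  assumes "cgood G" "m \<noteq> 0" "nrm (nfp (smul m t @ smul (-1) (concat (map gen G)))) = []"
  shows "evp L R t y = 0"
proof -
  have "evp L R (smul m t @ smul (-1) (concat (map gen G))) y = 0"
    using evp_nrm[of L R _ y] evp_nfp[of _ y] assms(3) by (metis evp_Nil)
  then have "of_int m *\<^sub>R evp L R t y = 0" using evp_cert0[OF assms(1)] by simp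
  then show ?thesis using assms(2) by simp
qed

end

section \<open>Substitution of right multiplications\<close>

definition mulpoly :: "poly \<Rightarrow> poly \<Rightarrow> poly" where
  "mulpoly p q = concat (map (\<lambda>x. map (\<lambda>y. (fst x * fst y, snd x @ snd y)) q) p)"

fun sw :: "(nat \<Rightarrow> poly) \<Rightarrow> nat list \<Rightarrow> poly" where
  "sw ps [] = [(1,[])]"
| "sw ps (a # w) = (if 8 \<le> a \<and> a \<le> 14 then mulpoly (ps (a - 7)) (sw ps w) else mulpoly [(1,[a])] (sw ps w))"

definition nR :: "nat list \<Rightarrow> nat" where "nR w = length (filter (\<lambda>a. 8 \<le> a \<and> a \<le> 14) w)"

definition substP :: "(nat \<Rightarrow> poly) \<Rightarrow> nat \<Rightarrow> poly \<Rightarrow> poly" where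
  "substP ps k p = concat (map (\<lambda>x. smul (fst x * 2 ^ (k - nR (snd x))) (sw ps (snd x))) p)"

context ob
begin

lemma evp_map1: "evp L R (map (\<lambda>y. (c * fst y, u @ snd y)) q) z = of_int c *\<^sub>R ev L R u (evp L R q z)"
proof (induct q)
  case Nil then show ?case by (simp add: linear_0[OF ev_linear])
next
  case (Cons y q)
  obtain d v where y: "y = (d, v)" by (cases y) auto
  show ?case using Cons
    by (simp add: y ev_append linear_add[OF ev_linear] linear_scale[OF ev_linear] scaleR_add_right)
qed

lemma evp_mulpoly: "evp L R (mulpoly p q) y = evp L R p (evp L R q y)"
proof (induct p)
  case Nil then show ?case by (simp add: mulpoly_def)
next
  case (Cons x p)
  obtain c u where x: "x = (c, u)" by (cases x) auto
  have "evp L R (mulpoly (x # p) q) y = evp L R (map (\<lambda>y. (c * fst y, u @ snd y)) q) y + evp L R (mulpoly p q) y"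
    by (simp add: mulpoly_def x)
  then show ?case using Cons by (simp add: evp_map1 x)
qed

lemma sw_sound:
  assumes hyp: "\<And>i z. 1 \<le> i \<Longrightarrow> i \<le> 7 \<Longrightarrow> evp L R (ps i) z = 2 *\<^sub>R R z (obasis i)"
  shows "evp L R (sw ps w) y = 2 ^ nR w *\<^sub>R ev L R w y"
proof (induct w)
  case Nil then show ?case by (simp add: nR_def)
next
  case (Cons a w)
  show ?case
  proof (cases "8 \<le> a \<and> a \<le> 14")
    case True
    have "sw ps (a # w) = mulpoly (ps (a - 7)) (sw ps w)" using True by (simp only: sw.simps if_True simp_thms)
    then have "evp L R (sw ps (a # w)) y = evp L R (ps (a - 7)) (2 ^ nR w *\<^sub>R ev L R w y)"
      using Cons by (simp add: evp_mulpoly)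
    also have "\<dots> = 2 *\<^sub>R R (2 ^ nR w *\<^sub>R ev L R w y) (obasis (a - 7))"
      using True hyp[of "a - 7"] by auto
    also have "\<dots> = 2 ^ nR (a # w) *\<^sub>R ev L R (a # w) y"
      using True by (simp add: nR_def R_scale lt_def)
    finally show ?thesis .
  next
    case False
    have "sw ps (a # w) = mulpoly [(1,[a])] (sw ps w)" using False by (simp only: sw.simps if_False)
    then have e1: "evp L R (sw ps (a # w)) y = lt L R a (2 ^ nR w *\<^sub>R ev L R w y)"
      using Cons by (simp add: evp_mulpoly)
    have e2: "nR (a # w) = nR w" using False by (simp add: nR_def)
    show ?thesis unfolding e1 e2 by (simp add: lt_scale)
  qed
qed

lemma substP_sound:
  assumes hyp: "\<And>i z. 1 \<le> i \<Longrightarrow> i \<le> 7 \<Longrightarrow> evp L R (ps i) z = 2 *\<^sub>R R z (obasis i)"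
    and k: "list_all (\<lambda>x. nR (snd x) \<le> k) p"
  shows "evp L R (substP ps k p) y = 2 ^ k *\<^sub>R evp L R p y"
  using k
proof (induct p)
  case Nil then show ?case by (simp add: substP_def)
next
  case (Cons x p)
  obtain c w where x: "x = (c, w)" by (cases x) auto
  have kw: "nR w \<le> k" using Cons.prems x by simp
  have "evp L R (substP ps k (x # p)) y
      = of_int (c * 2 ^ (k - nR w)) *\<^sub>R (2 ^ nR w *\<^sub>R ev L R w y) + evp L R (substP ps k p) y"
    by (simp add: substP_def x sw_sound[OF hyp])
  also have "of_int (c * 2 ^ (k - nR w)) *\<^sub>R (2 ^ nR w *\<^sub>R ev L R w y) = 2 ^ k *\<^sub>R (of_int c *\<^sub>R ev L R w y)"
  proof -
    have "(2::real) ^ (k - nR w) * 2 ^ nR w = 2 ^ k" using kw by (simp add: power_add[symmetric])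
    then show ?thesis by (simp add: algebra_simps)
  qed
  finally show ?case using Cons by (simp add: x scaleR_add_right)
qed

lemma cert_subst:
  assumes hyp: "\<And>i z. 1 \<le> i \<Longrightarrow> i \<le> 7 \<Longrightarrow> evp L R (ps i) z = 2 *\<^sub>R R z (obasis i)"
    and k: "list_all (\<lambda>x. nR (snd x) \<le> k) t"
    and n: "nrm (nfp (substP ps k t)) = []"
  shows "evp L R t y = 0"
proof -
  have "evp L R (substP ps k t) y = 0"
    using evp_nrm[of L R _ y] evp_nfp[of _ y] n by (metis evp_Nil)
  then show ?thesis using substP_sound[OF hyp k] by simp
qed

end


definition P12 :: poly where
  "P12 = [(5,[]),(-1,[1,8]),(-1,[2,9]),(-1,[3,10]),(-1,[4,11]),(-1,[5,12]),(-1,[6,13]),(-1,[7,14])]"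
definition tN1 :: "nat \<Rightarrow> poly" where "tN1 j = pre [j] P12 @ smul (-1) (pre [j+7] P12)"
definition tN2 :: poly where
  "tN2 = [(12,[])] @ smul (-1) P12 @ concat (map (\<lambda>k. pre [k] (post [k] P12)) [1,2,3,4,5,6,7])"

definition polyR :: "nat \<Rightarrow> poly" where
  "polyR i = (if i = 1 then [(-1,[1]),(1,[2,3]),(1,[4,5]),(-1,[6,7])] else if i = 2 then [(-1,[1,3]),(-1,[2]),(1,[4,6]),(1,[5,7])] else if i = 3 then [(1,[1,2]),(-1,[3]),(1,[4,7]),(-1,[5,6])] else if i = 4 then [(-1,[1,5]),(-1,[2,6]),(-1,[3,7]),(-1,[4])] else if i = 5 then [(1,[1,4]),(-1,[2,7]),(1,[3,6]),(-1,[5])] else if i = 6 then [(1,[1,7]),(1,[2,4]),(-1,[3,5]),(-1,[6])] else if i = 7 then [(-1,[1,6]),(1,[2,5]),(1,[3,4]),(-1,[7])] else [])"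

definition tR :: "nat \<Rightarrow> poly" where "tR i = [(2,[i+7])] @ smul (-1) (polyR i)"

definition cN1_1 :: cert where "cN1_1 = [(-1,[],0,1,1,[1]),
  (1,[8],0,1,1,[]),
  (-1,[],1,1,1,[1]),
  (1,[],1,1,2,[9]),
  (1,[],1,1,3,[10]),
  (1,[],1,1,4,[11]),
  (1,[],1,1,5,[12]),
  (1,[],1,1,6,[13]),
  (1,[],1,1,7,[14]),
  (-1,[9],0,2,1,[]),
  (-1,[2],1,2,1,[]),
  (-1,[9],1,2,1,[]),
  (1,[],0,2,2,[1]),
  (1,[],0,2,3,[]),
  (-2,[],0,2,6,[12]),
  (-2,[],1,2,6,[12]),
  (-1,[10],0,3,1,[]),
  (-1,[3],1,3,1,[]),
  (-1,[10],1,3,1,[]),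
  (-3,[],0,3,2,[]),
  (1,[],0,3,3,[1]),
  (-1,[11],0,4,1,[]),
  (-1,[4],1,4,1,[]),
  (-1,[11],1,4,1,[]),
  (1,[],0,4,4,[1]),
  (1,[],0,4,5,[]),
  (-1,[12],0,5,1,[]),
  (-1,[5],1,5,1,[]),
  (-1,[12],1,5,1,[]),
  (2,[],0,5,2,[6]),
  (2,[6],0,5,2,[]),
  (2,[13],1,5,2,[]),
  (1,[],0,5,4,[]),
  (2,[],1,5,4,[]),
  (1,[],0,5,5,[1]),
  (4,[],0,5,6,[2]),
  (2,[],1,5,6,[2]),
  (-2,[2],1,5,6,[]),
  (-1,[13],0,6,1,[]),
  (-1,[6],1,6,1,[]),
  (-1,[13],1,6,1,[]),
  (-2,[],0,6,2,[12]),
  (1,[],0,6,6,[1]),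
  (-1,[],0,6,7,[]),
  (-1,[14],0,7,1,[]),
  (-1,[7],1,7,1,[]),
  (-1,[14],1,7,1,[]),
  (-1,[],0,7,6,[]),
  (-2,[],1,7,6,[]),
  (1,[],0,7,7,[1])]"
definition cN1_2 :: cert where "cN1_2 = [(1,[],0,1,1,[2]),
  (-2,[2],0,1,1,[]),
  (2,[9],0,1,1,[]),
  (1,[],1,1,1,[2]),
  (-1,[2],1,1,1,[]),
  (-3,[],0,1,2,[1]),
  (-1,[],0,1,2,[8]),
  (-1,[8],0,1,2,[]),
  (-2,[],1,1,2,[1]),
  (-3,[],0,1,3,[]),
  (2,[],1,1,3,[]),
  (-2,[],0,2,2,[2]),
  (2,[9],0,2,2,[]),
  (-2,[],1,2,2,[2]),
  (2,[],1,2,3,[10]),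
  (2,[],1,2,4,[11]),
  (2,[],1,2,5,[12]),
  (2,[],1,2,6,[13]),
  (2,[],1,2,7,[14]),
  (2,[],0,3,1,[]),
  (2,[],1,3,1,[]),
  (-2,[10],0,3,2,[]),
  (-2,[3],1,3,2,[]),
  (-2,[10],1,3,2,[]),
  (2,[],0,3,3,[2]),
  (4,[],0,3,5,[11]),
  (4,[],1,3,5,[11]),
  (-2,[11],0,4,2,[]),
  (-2,[4],1,4,2,[]),
  (-2,[11],1,4,2,[]),
  (-4,[],0,4,3,[5]),
  (-4,[5],0,4,3,[]),
  (-4,[12],1,4,3,[]),
  (2,[],0,4,4,[2]),
  (-8,[],0,4,5,[3]),
  (-4,[],1,4,5,[3]),
  (4,[3],1,4,5,[]),
  (-2,[],0,4,6,[]),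
  (-4,[],1,4,6,[]),
  (-2,[12],0,5,2,[]),
  (-2,[5],1,5,2,[]),
  (-2,[12],1,5,2,[]),
  (4,[],0,5,3,[11]),
  (2,[],0,5,5,[2]),
  (2,[],0,5,7,[]),
  (-2,[13],0,6,2,[]),
  (-2,[6],1,6,2,[]),
  (-2,[13],1,6,2,[]),
  (-2,[],0,6,4,[]),
  (2,[],0,6,6,[2]),
  (-2,[14],0,7,2,[]),
  (-2,[7],1,7,2,[]),
  (-2,[14],1,7,2,[]),
  (2,[],0,7,5,[]),
  (4,[],1,7,5,[]),
  (2,[],0,7,7,[2])]"
definition cN1_3 :: cert where "cN1_3 = [(1,[],0,1,1,[3]),
  (-2,[3],0,1,1,[]),
  (2,[10],0,1,1,[]),
  (1,[],1,1,1,[3]),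
  (-1,[3],1,1,1,[]),
  (3,[],0,1,2,[]),
  (-3,[],0,1,3,[1]),
  (-1,[],0,1,3,[8]),
  (-1,[8],0,1,3,[]),
  (-2,[],1,1,3,[1]),
  (1,[],0,2,1,[]),
  (1,[],0,2,2,[3]),
  (-2,[3],0,2,2,[]),
  (2,[10],0,2,2,[]),
  (1,[],1,2,2,[3]),
  (-1,[3],1,2,2,[]),
  (-3,[],0,2,3,[2]),
  (-1,[],0,2,3,[9]),
  (-1,[9],0,2,3,[]),
  (-2,[],1,2,3,[2]),
  (-4,[],0,2,5,[11]),
  (-4,[],1,2,5,[11]),
  (-2,[],0,3,3,[3]),
  (2,[10],0,3,3,[]),
  (-2,[],1,3,3,[3]),
  (2,[],1,3,4,[11]),
  (2,[],1,3,5,[12]),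
  (2,[],1,3,6,[13]),
  (2,[],1,3,7,[14]),
  (4,[],0,4,2,[5]),
  (4,[5],0,4,2,[]),
  (4,[12],1,4,2,[]),
  (-2,[11],0,4,3,[]),
  (-2,[4],1,4,3,[]),
  (-2,[11],1,4,3,[]),
  (2,[],0,4,4,[3]),
  (8,[],0,4,5,[2]),
  (4,[],1,4,5,[2]),
  (-4,[2],1,4,5,[]),
  (-2,[],0,4,7,[]),
  (-4,[],1,4,7,[]),
  (-4,[],0,5,2,[11]),
  (-2,[12],0,5,3,[]),
  (-2,[5],1,5,3,[]),
  (-2,[12],1,5,3,[]),
  (2,[],0,5,5,[3]),
  (-2,[],0,5,6,[]),
  (-2,[13],0,6,3,[]),
  (-2,[6],1,6,3,[]),
  (-2,[13],1,6,3,[]),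
  (-2,[],0,6,5,[]),
  (-4,[],1,6,5,[]),
  (2,[],0,6,6,[3]),
  (-2,[14],0,7,3,[]),
  (-2,[7],1,7,3,[]),
  (-2,[14],1,7,3,[]),
  (-2,[],0,7,4,[]),
  (2,[],0,7,7,[3])]"
definition cN1_4 :: cert where "cN1_4 = [(1,[],0,1,1,[4]),
  (-2,[4],0,1,1,[]),
  (2,[11],0,1,1,[]),
  (1,[],1,1,1,[4]),
  (-1,[4],1,1,1,[]),
  (-3,[],0,1,4,[1]),
  (-1,[],0,1,4,[8]),
  (-1,[8],0,1,4,[]),
  (-2,[],1,1,4,[1]),
  (5,[],0,1,5,[]),
  (6,[],1,1,5,[]),
  (1,[],0,2,2,[4]),
  (-2,[4],0,2,2,[]),
  (2,[11],0,2,2,[]),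
  (1,[],1,2,2,[4]),
  (-1,[4],1,2,2,[]),
  (-3,[],0,2,4,[2]),
  (-1,[],0,2,4,[9]),
  (-1,[9],0,2,4,[]),
  (-2,[],1,2,4,[2]),
  (4,[],0,2,5,[10]),
  (4,[],1,2,5,[10]),
  (1,[],0,2,6,[]),
  (2,[],1,2,6,[]),
  (-4,[],0,3,2,[5]),
  (-4,[5],0,3,2,[]),
  (-4,[12],1,3,2,[]),
  (1,[],0,3,3,[4]),
  (-2,[4],0,3,3,[]),
  (2,[11],0,3,3,[]),
  (1,[],1,3,3,[4]),
  (-1,[4],1,3,3,[]),
  (-3,[],0,3,4,[3]),
  (-1,[],0,3,4,[10]),
  (-1,[10],0,3,4,[]),
  (-2,[],1,3,4,[3]),
  (-8,[],0,3,5,[2]),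
  (-4,[],1,3,5,[2]),
  (4,[2],1,3,5,[]),
  (5,[],0,3,7,[]),
  (6,[],1,3,7,[]),
  (-2,[],0,4,4,[4]),
  (2,[11],0,4,4,[]),
  (-2,[],1,4,4,[4]),
  (2,[],1,4,5,[12]),
  (2,[],1,4,6,[13]),
  (2,[],1,4,7,[14]),
  (2,[],0,5,1,[]),
  (2,[],1,5,1,[]),
  (4,[],0,5,2,[10]),
  (-2,[12],0,5,4,[]),
  (-2,[5],1,5,4,[]),
  (-2,[12],1,5,4,[]),
  (2,[],0,5,5,[4]),
  (6,[],0,6,2,[]),
  (2,[],1,6,2,[]),
  (-2,[13],0,6,4,[]),
  (-2,[6],1,6,4,[]),
  (-2,[13],1,6,4,[]),
  (2,[],0,6,6,[4]),
  (2,[],0,7,3,[]),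
  (2,[],1,7,3,[]),
  (-2,[14],0,7,4,[]),
  (-2,[7],1,7,4,[]),
  (-2,[14],1,7,4,[]),
  (2,[],0,7,7,[4])]"
definition cN1_5 :: cert where "cN1_5 = [(1,[],0,1,1,[5]),
  (-2,[5],0,1,1,[]),
  (2,[12],0,1,1,[]),
  (1,[],1,1,1,[5]),
  (-1,[5],1,1,1,[]),
  (-5,[],0,1,4,[]),
  (-4,[],1,1,4,[]),
  (-3,[],0,1,5,[1]),
  (-1,[],0,1,5,[8]),
  (-1,[8],0,1,5,[]),
  (-2,[],1,1,5,[1]),
  (1,[],0,2,2,[5]),
  (-2,[5],0,2,2,[]),
  (2,[12],0,2,2,[]),
  (1,[],1,2,2,[5]),
  (-1,[5],1,2,2,[]),
  (-4,[],0,2,4,[10]),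
  (-4,[],1,2,4,[10]),
  (-3,[],0,2,5,[2]),
  (-1,[],0,2,5,[9]),
  (-1,[9],0,2,5,[]),
  (-2,[],1,2,5,[2]),
  (1,[],0,2,7,[]),
  (2,[],1,2,7,[]),
  (4,[],0,3,2,[4]),
  (4,[4],0,3,2,[]),
  (4,[11],1,3,2,[]),
  (1,[],0,3,3,[5]),
  (-2,[5],0,3,3,[]),
  (2,[12],0,3,3,[]),
  (1,[],1,3,3,[5]),
  (-1,[5],1,3,3,[]),
  (8,[],0,3,4,[2]),
  (4,[],1,3,4,[2]),
  (-4,[2],1,3,4,[]),
  (-3,[],0,3,5,[3]),
  (-1,[],0,3,5,[10]),
  (-1,[10],0,3,5,[]),
  (-2,[],1,3,5,[3]),
  (-5,[],0,3,6,[]),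
  (-6,[],1,3,6,[]),
  (1,[],0,4,1,[]),
  (-4,[],0,4,2,[10]),
  (1,[],0,4,4,[5]),
  (-2,[5],0,4,4,[]),
  (2,[12],0,4,4,[]),
  (1,[],1,4,4,[5]),
  (-1,[5],1,4,4,[]),
  (-3,[],0,4,5,[4]),
  (-1,[],0,4,5,[11]),
  (-1,[11],0,4,5,[]),
  (-2,[],1,4,5,[4]),
  (-2,[],0,5,5,[5]),
  (2,[12],0,5,5,[]),
  (-2,[],1,5,5,[5]),
  (2,[],1,5,6,[13]),
  (2,[],1,5,7,[14]),
  (-2,[],0,6,3,[]),
  (-2,[],1,6,3,[]),
  (-2,[13],0,6,5,[]),
  (-2,[6],1,6,5,[]),
  (-2,[13],1,6,5,[]),
  (2,[],0,6,6,[5]),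
  (6,[],0,7,2,[]),
  (2,[],1,7,2,[]),
  (-2,[14],0,7,5,[]),
  (-2,[7],1,7,5,[]),
  (-2,[14],1,7,5,[]),
  (2,[],0,7,7,[5])]"
definition cN1_6 :: cert where "cN1_6 = [(1,[],0,1,1,[6]),
  (-2,[6],0,1,1,[]),
  (2,[13],0,1,1,[]),
  (1,[],1,1,1,[6]),
  (-1,[6],1,1,1,[]),
  (4,[],0,1,4,[10]),
  (4,[],1,1,4,[10]),
  (-3,[],0,1,6,[1]),
  (-1,[],0,1,6,[8]),
  (-1,[8],0,1,6,[]),
  (-2,[],1,1,6,[1]),
  (-1,[],0,1,7,[]),
  (-2,[],1,1,7,[]),
  (1,[],0,2,2,[6]),
  (-2,[6],0,2,2,[]),
  (2,[13],0,2,2,[]),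
  (1,[],1,2,2,[6]),
  (-1,[6],1,2,2,[]),
  (-5,[],0,2,4,[]),
  (-4,[],1,2,4,[]),
  (-3,[],0,2,6,[2]),
  (-1,[],0,2,6,[9]),
  (-1,[9],0,2,6,[]),
  (-2,[],1,2,6,[2]),
  (-4,[],0,3,1,[4]),
  (-4,[4],0,3,1,[]),
  (-4,[11],1,3,1,[]),
  (1,[],0,3,3,[6]),
  (-2,[6],0,3,3,[]),
  (2,[13],0,3,3,[]),
  (1,[],1,3,3,[6]),
  (-1,[6],1,3,3,[]),
  (-8,[],0,3,4,[1]),
  (-4,[],1,3,4,[1]),
  (4,[1],1,3,4,[]),
  (5,[],0,3,5,[]),
  (4,[],1,3,5,[]),
  (-3,[],0,3,6,[3]),
  (-1,[],0,3,6,[10]),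
  (-1,[10],0,3,6,[]),
  (-2,[],1,3,6,[3]),
  (4,[],0,4,1,[10]),
  (1,[],0,4,2,[]),
  (1,[],0,4,4,[6]),
  (-2,[6],0,4,4,[]),
  (2,[13],0,4,4,[]),
  (1,[],1,4,4,[6]),
  (-1,[6],1,4,4,[]),
  (-3,[],0,4,6,[4]),
  (-1,[],0,4,6,[11]),
  (-1,[11],0,4,6,[]),
  (-2,[],1,4,6,[4]),
  (-1,[],0,5,3,[]),
  (1,[],0,5,5,[6]),
  (-2,[6],0,5,5,[]),
  (2,[13],0,5,5,[]),
  (1,[],1,5,5,[6]),
  (-1,[6],1,5,5,[]),
  (-3,[],0,5,6,[5]),
  (-1,[],0,5,6,[12]),
  (-1,[12],0,5,6,[]),
  (-2,[],1,5,6,[5]),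
  (-2,[],0,6,6,[6]),
  (2,[13],0,6,6,[]),
  (-2,[],1,6,6,[6]),
  (2,[],1,6,7,[14]),
  (-6,[],0,7,1,[]),
  (-2,[],1,7,1,[]),
  (-2,[14],0,7,6,[]),
  (-2,[7],1,7,6,[]),
  (-2,[14],1,7,6,[]),
  (2,[],0,7,7,[6])]"
definition cN1_7 :: cert where "cN1_7 = [(1,[],0,1,1,[7]),
  (-2,[7],0,1,1,[]),
  (2,[14],0,1,1,[]),
  (1,[],1,1,1,[7]),
  (-1,[7],1,1,1,[]),
  (-4,[],0,1,4,[9]),
  (-4,[],1,1,4,[9]),
  (1,[],0,1,6,[]),
  (-3,[],0,1,7,[1]),
  (-1,[],0,1,7,[8]),
  (-1,[8],0,1,7,[]),
  (-2,[],1,1,7,[1]),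
  (4,[],0,2,1,[4]),
  (4,[4],0,2,1,[]),
  (4,[11],1,2,1,[]),
  (1,[],0,2,2,[7]),
  (-2,[7],0,2,2,[]),
  (2,[14],0,2,2,[]),
  (1,[],1,2,2,[7]),
  (-1,[7],1,2,2,[]),
  (8,[],0,2,4,[1]),
  (4,[],1,2,4,[1]),
  (-4,[1],1,2,4,[]),
  (-5,[],0,2,5,[]),
  (-4,[],1,2,5,[]),
  (-3,[],0,2,7,[2]),
  (-1,[],0,2,7,[9]),
  (-1,[9],0,2,7,[]),
  (-2,[],1,2,7,[2]),
  (1,[],0,3,3,[7]),
  (-2,[7],0,3,3,[]),
  (2,[14],0,3,3,[]),
  (1,[],1,3,3,[7]),
  (-1,[7],1,3,3,[]),
  (-5,[],0,3,4,[]),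
  (-4,[],1,3,4,[]),
  (-3,[],0,3,7,[3]),
  (-1,[],0,3,7,[10]),
  (-1,[10],0,3,7,[]),
  (-2,[],1,3,7,[3]),
  (-4,[],0,4,1,[9]),
  (1,[],0,4,3,[]),
  (1,[],0,4,4,[7]),
  (-2,[7],0,4,4,[]),
  (2,[14],0,4,4,[]),
  (1,[],1,4,4,[7]),
  (-1,[7],1,4,4,[]),
  (-3,[],0,4,7,[4]),
  (-1,[],0,4,7,[11]),
  (-1,[11],0,4,7,[]),
  (-2,[],1,4,7,[4]),
  (1,[],0,5,2,[]),
  (1,[],0,5,5,[7]),
  (-2,[7],0,5,5,[]),
  (2,[14],0,5,5,[]),
  (1,[],1,5,5,[7]),
  (-1,[7],1,5,5,[]),
  (-3,[],0,5,7,[5]),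
  (-1,[],0,5,7,[12]),
  (-1,[12],0,5,7,[]),
  (-2,[],1,5,7,[5]),
  (3,[],0,6,1,[]),
  (1,[],0,6,6,[7]),
  (-2,[7],0,6,6,[]),
  (2,[14],0,6,6,[]),
  (1,[],1,6,6,[7]),
  (-1,[7],1,6,6,[]),
  (-3,[],0,6,7,[6]),
  (-1,[],0,6,7,[13]),
  (-1,[13],0,6,7,[]),
  (-2,[],1,6,7,[6]),
  (-2,[],0,7,7,[7]),
  (2,[14],0,7,7,[]),
  (-2,[],1,7,7,[7])]"
definition cR_1 :: cert where "cR_1 = [(1,[],0,2,6,[12]),
  (1,[],1,2,6,[12]),
  (1,[],0,3,2,[]),
  (-1,[],0,5,2,[6]),
  (-1,[6],0,5,2,[]),
  (-1,[13],1,5,2,[]),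
  (-1,[],0,5,4,[]),
  (-1,[],1,5,4,[]),
  (-2,[],0,5,6,[2]),
  (-1,[],1,5,6,[2]),
  (1,[2],1,5,6,[]),
  (1,[],0,6,2,[12]),
  (1,[],0,7,6,[]),
  (1,[],1,7,6,[])]"
definition cR_2 :: cert where "cR_2 = [(1,[],0,1,3,[]),
  (-1,[],0,3,5,[11]),
  (-1,[],1,3,5,[11]),
  (1,[],0,4,3,[5]),
  (1,[5],0,4,3,[]),
  (1,[12],1,4,3,[]),
  (2,[],0,4,5,[3]),
  (1,[],1,4,5,[3]),
  (-1,[3],1,4,5,[]),
  (1,[],0,4,6,[]),
  (1,[],1,4,6,[]),
  (-1,[],0,5,3,[11]),
  (-1,[],0,7,5,[]),
  (-1,[],1,7,5,[])]"
definition cR_3 :: cert where "cR_3 = [(-1,[],0,1,2,[]),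
  (1,[],0,2,5,[11]),
  (1,[],1,2,5,[11]),
  (-1,[],0,4,2,[5]),
  (-1,[5],0,4,2,[]),
  (-1,[12],1,4,2,[]),
  (-2,[],0,4,5,[2]),
  (-1,[],1,4,5,[2]),
  (1,[2],1,4,5,[]),
  (1,[],0,4,7,[]),
  (1,[],1,4,7,[]),
  (1,[],0,5,2,[11]),
  (1,[],0,6,5,[]),
  (1,[],1,6,5,[])]"
definition cR_4 :: cert where "cR_4 = [(-1,[],0,1,5,[]),
  (-1,[],1,1,5,[]),
  (-1,[],0,2,5,[10]),
  (-1,[],1,2,5,[10]),
  (1,[],0,3,2,[5]),
  (1,[5],0,3,2,[]),
  (1,[12],1,3,2,[]),
  (2,[],0,3,5,[2]),
  (1,[],1,3,5,[2]),
  (-1,[2],1,3,5,[]),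
  (-1,[],0,3,7,[]),
  (-1,[],1,3,7,[]),
  (-1,[],0,5,2,[10]),
  (-1,[],0,6,2,[])]"
definition cR_5 :: cert where "cR_5 = [(1,[],0,1,4,[]),
  (1,[],1,1,4,[]),
  (1,[],0,2,4,[10]),
  (1,[],1,2,4,[10]),
  (-1,[],0,3,2,[4]),
  (-1,[4],0,3,2,[]),
  (-1,[11],1,3,2,[]),
  (-2,[],0,3,4,[2]),
  (-1,[],1,3,4,[2]),
  (1,[2],1,3,4,[]),
  (1,[],0,3,6,[]),
  (1,[],1,3,6,[]),
  (1,[],0,4,2,[10]),
  (-1,[],0,7,2,[])]"
definition cR_6 :: cert where "cR_6 = [(-1,[],0,1,4,[10]),
  (-1,[],1,1,4,[10]),
  (1,[],0,2,4,[]),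
  (1,[],1,2,4,[]),
  (1,[],0,3,1,[4]),
  (1,[4],0,3,1,[]),
  (1,[11],1,3,1,[]),
  (2,[],0,3,4,[1]),
  (1,[],1,3,4,[1]),
  (-1,[1],1,3,4,[]),
  (-1,[],0,3,5,[]),
  (-1,[],1,3,5,[]),
  (-1,[],0,4,1,[10]),
  (1,[],0,7,1,[])]"
definition cR_7 :: cert where "cR_7 = [(1,[],0,1,4,[9]),
  (1,[],1,1,4,[9]),
  (-1,[],0,2,1,[4]),
  (-1,[4],0,2,1,[]),
  (-1,[11],1,2,1,[]),
  (-2,[],0,2,4,[1]),
  (-1,[],1,2,4,[1]),
  (1,[1],1,2,4,[]),
  (1,[],0,2,5,[]),
  (1,[],1,2,5,[]),
  (1,[],0,3,4,[]),
  (1,[],1,3,4,[]),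
  (1,[],0,4,1,[9]),
  (-1,[],0,6,1,[])]"
context ob
begin

lemma N1_1: "evp L R (tN1 1) y = 0"
  by (rule cert_thm0[of cN1_1 1]) (simp add: cgood_def cN1_1_def, simp, code_simp)

lemma N1_2: "evp L R (tN1 2) y = 0"
  by (rule cert_thm0[of cN1_2 2]) (simp add: cgood_def cN1_2_def, simp, code_simp)

lemma N1_3: "evp L R (tN1 3) y = 0"
  by (rule cert_thm0[of cN1_3 2]) (simp add: cgood_def cN1_3_def, simp, code_simp)

lemma N1_4: "evp L R (tN1 4) y = 0"
  by (rule cert_thm0[of cN1_4 2]) (simp add: cgood_def cN1_4_def, simp, code_simp)

lemma N1_5: "evp L R (tN1 5) y = 0"
  by (rule cert_thm0[of cN1_5 2]) (simp add: cgood_def cN1_5_def, simp, code_simp)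

lemma N1_6: "evp L R (tN1 6) y = 0"
  by (rule cert_thm0[of cN1_6 2]) (simp add: cgood_def cN1_6_def, simp, code_simp)

lemma N1_7: "evp L R (tN1 7) y = 0"
  by (rule cert_thm0[of cN1_7 2]) (simp add: cgood_def cN1_7_def, simp, code_simp)

lemma Rs_1: "evp L R (tR 1) y = 0"
  by (rule cert_thm0[of cR_1 1]) (simp add: cgood_def cR_1_def, simp, code_simp)

lemma Rs_2: "evp L R (tR 2) y = 0"
  by (rule cert_thm0[of cR_2 1]) (simp add: cgood_def cR_2_def, simp, code_simp)

lemma Rs_3: "evp L R (tR 3) y = 0"
  by (rule cert_thm0[of cR_3 1]) (simp add: cgood_def cR_3_def, simp, code_simp)

lemma Rs_4: "evp L R (tR 4) y = 0"
  by (rule cert_thm0[of cR_4 1]) (simp add: cgood_def cR_4_def, simp, code_simp)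

lemma Rs_5: "evp L R (tR 5) y = 0"
  by (rule cert_thm0[of cR_5 1]) (simp add: cgood_def cR_5_def, simp, code_simp)

lemma Rs_6: "evp L R (tR 6) y = 0"
  by (rule cert_thm0[of cR_6 1]) (simp add: cgood_def cR_6_def, simp, code_simp)

lemma Rs_7: "evp L R (tR 7) y = 0"
  by (rule cert_thm0[of cR_7 1]) (simp add: cgood_def cR_7_def, simp, code_simp)

lemma polyR_sound: assumes "1 \<le> i" "i \<le> 7" shows "evp L R (polyR i) z = 2 *\<^sub>R R z (obasis i)"
proof -
  have "i = 1 \<or> i = 2 \<or> i = 3 \<or> i = 4 \<or> i = 5 \<or> i = 6 \<or> i = 7" using assms by auto
  then have "evp L R (tR i) z = 0" using Rs_1 Rs_2 Rs_3 Rs_4 Rs_5 Rs_6 Rs_7 by auto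
  then show ?thesis using assms by (simp add: tR_def lt_def)
qed

lemma N2c: "evp L R tN2 y = 0"
  by (rule cert_subst[of polyR 1]) (rule polyR_sound, assumption+, code_simp, code_simp)

end


definition ocoord :: "oct \<Rightarrow> nat \<Rightarrow> real" where
  "ocoord q k = [Re (fst (fst q)), Im (fst (fst q)), Re (snd (fst q)), Im (snd (fst q)),
                 Re (fst (snd q)), Im (fst (snd q)), Re (snd (snd q)), Im (snd (snd q))] ! k"

lemma sum8: "(\<Sum>k::nat<8. f k) = f 0 + f 1 + f 2 + f 3 + f 4 + f 5 + f 6 + (f 7 :: 'a::comm_monoid_add)"
  by (simp add: numeral_eq_Suc add_ac)

lemma oct_decomp: "q = (\<Sum>k<8. ocoord q k *\<^sub>R obasis k)"
proof -
  obtain a b c d where q: "q = ((a,b),(c,d))" by (metis prod.collapse)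
  show ?thesis unfolding sum8
    by (simp add: q ocoord_def obasis_def qbasis_def scaleR_conv_of_real complex_eq_iff)
qed

lemma ocoord_add: "k < 8 \<Longrightarrow> ocoord (x + y) k = ocoord x k + ocoord y k"
  unfolding less8 by (elim disjE) (simp_all add: ocoord_def)
lemma ocoord_scale: "k < 8 \<Longrightarrow> ocoord (r *\<^sub>R x) k = r * ocoord x k"
  unfolding less8 by (elim disjE) (simp_all add: ocoord_def)
lemma ocoord_basis_all: "\<forall>t<8. \<forall>k<8. ocoord (obasis t) k = (if t = k then 1 else 0)"
  unfolding all8 by (simp add: ocoord_def obasis_def qbasis_def)
lemma ocoord_basis: "t < 8 \<Longrightarrow> k < 8 \<Longrightarrow> ocoord (obasis t) k = (if t = k then 1 else 0)"
  using ocoord_basis_all by blast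

lemma omul_scale1: "omul (r *\<^sub>R x) y = r *\<^sub>R omul x y"
proof -
  obtain a b c d where x: "x = ((a,b),(c,d))" by (metis prod.collapse)
  obtain a' b' c' d' where y: "y = ((a',b'),(c',d'))" by (metis prod.collapse)
  show ?thesis by (simp add: x y omul_def qmul_def qcnj_def scaleR_conv_of_real algebra_simps)
qed
lemma omul_scale2: "omul x (r *\<^sub>R y) = r *\<^sub>R omul x y"
proof -
  obtain a b c d where x: "x = ((a,b),(c,d))" by (metis prod.collapse)
  obtain a' b' c' d' where y: "y = ((a',b'),(c',d'))" by (metis prod.collapse)
  show ?thesis by (simp add: x y omul_def qmul_def qcnj_def scaleR_conv_of_real algebra_simps)
qed

lemma ocnj_basis_all: "\<forall>i<8. ocnj (obasis i) = of_int (ts i i) *\<^sub>R obasis i"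
  unfolding all8 by (simp add: ocnj_def qcnj_def obasis_def qbasis_def ts_def stab_def zero_prod_def
     del: One_nat_def add: One_nat_def[symmetric])
lemma ocnj_basis: "i < 8 \<Longrightarrow> ocnj (obasis i) = of_int (ts i i) *\<^sub>R obasis i"
  using ocnj_basis_all by blast

lemma tab_T1: "list_all (\<lambda>j. list_all (\<lambda>k. tt j k < 8) [0..<8]) [0..<8]"
  by code_simp
lemma tt_lt: "j < 8 \<Longrightarrow> k < 8 \<Longrightarrow> tt j k < 8"
  using tab_T1 by (auto simp: list_all_iff)
lemma tab_T2: "list_all (\<lambda>j. list_all (\<lambda>k. (tt j k = 0) = (j = k)) [0..<8]) [0..<8]"
  by code_simp
lemma tt0: "j < 8 \<Longrightarrow> k < 8 \<Longrightarrow> (tt j k = 0) = (j = k)"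
  using tab_T2 by (auto simp: list_all_iff)
lemma tab_T3: "list_all (\<lambda>k. ts k k * ts k k = 1) [0..<8]"
  by code_simp
lemma tsq: "k < 8 \<Longrightarrow> ts k k * ts k k = 1"
  using tab_T3 by (auto simp: list_all_iff)
lemma tsq_real: "k < 8 \<Longrightarrow> real_of_int (ts k k) * real_of_int (ts k k) = 1"
  using tsq by (metis of_int_1 of_int_mult)
lemma ts00: "ts 0 0 = 1" by (simp add: ts_def stab_def)

lemma tab_T5: "list_all (\<lambda>k. list_all (\<lambda>i. tt i (tt k i) = k) [1..<8] \<and>
    sum_list (map (\<lambda>i. ts k i * ts i (tt k i)) [1..<8]) = (if k = 0 then -7 else 5)) [0..<8]"
  by code_simp

lemma tab_T6: "list_all (\<lambda>j. list_all (\<lambda>i. list_all (\<lambda>k.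
   (if tt (tt j i) k = 0 then ts j i * ts (tt j i) k else 0) =
   (if tt j (tt i k) = 0 then ts i k * ts j (tt i k) else 0)) [0..<8]) [0..<8]) [0..<8]"
  by code_simp

lemma ocoord0_scale_basis: "t < 8 \<Longrightarrow> ocoord (r *\<^sub>R obasis t) 0 = (if t = 0 then r else 0)"
  by (simp add: ocoord_scale ocoord_basis)

lemma real_assoc_basis:
  assumes "j < 8" "i < 8" "k < 8"
  shows "ocoord (omul (omul (obasis j) (obasis i)) (obasis k)) 0 = ocoord (omul (obasis j) (omul (obasis i) (obasis k))) 0"
proof -
  have e: "(if tt (tt j i) k = 0 then ts j i * ts (tt j i) k else 0) =
   (if tt j (tt i k) = 0 then ts i k * ts j (tt i k) else 0)"
    using tab_T6 assms by (auto simp: list_all_iff)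
  have "ocoord (omul (omul (obasis j) (obasis i)) (obasis k)) 0 =
     ocoord (of_int (ts j i * ts (tt j i) k) *\<^sub>R obasis (tt (tt j i) k)) 0"
    using assms by (simp add: omul_basis omul_scale1 tt_lt)
  also have "\<dots> = of_int (if tt (tt j i) k = 0 then ts j i * ts (tt j i) k else 0)"
    using assms by (simp add: ocoord0_scale_basis tt_lt)
  also have "\<dots> = of_int (if tt j (tt i k) = 0 then ts i k * ts j (tt i k) else 0)" using e by simp
  also have "\<dots> = ocoord (of_int (ts i k * ts j (tt i k)) *\<^sub>R obasis (tt j (tt i k))) 0"
    using assms by (simp add: ocoord0_scale_basis tt_lt)
  also have "\<dots> = ocoord (omul (obasis j) (omul (obasis i) (obasis k))) 0"
    using assms by (simp add: omul_basis omul_scale2 tt_lt mult.commute)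
  finally show ?thesis .
qed

lemma ocoord_mul_basis: "j < 8 \<Longrightarrow> k < 8 \<Longrightarrow> ocoord (omul (obasis j) (obasis k)) 0 = (if j = k then of_int (ts k k) else 0)"
  by (simp add: omul_basis ocoord0_scale_basis tt_lt tt0)


definition Pr :: "(oct \<Rightarrow> 'v::real_vector \<Rightarrow> 'v) \<Rightarrow> ('v \<Rightarrow> oct \<Rightarrow> 'v) \<Rightarrow> 'v \<Rightarrow> 'v" where
  "Pr L R y = (1/12) *\<^sub>R evp L R P12 y"
definition crd :: "(oct \<Rightarrow> 'v::real_vector \<Rightarrow> 'v) \<Rightarrow> ('v \<Rightarrow> oct \<Rightarrow> 'v) \<Rightarrow> nat \<Rightarrow> 'v \<Rightarrow> 'v" where
  "crd L R k y = of_int (ts k k) *\<^sub>R Pr L R (L (obasis k) y)"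

lemma ts_vals: "ts 0 0 = 1" "ts 1 1 = -1" "ts 2 2 = -1" "ts 3 3 = -1" "ts 4 4 = -1"
   "ts 5 5 = -1" "ts 6 6 = -1" "ts 7 7 = -1"
  by (simp_all add: ts_def stab_def)

lemma sum_list_scaleR: "sum_list (map (\<lambda>i. f i *\<^sub>R (v::'a::real_vector)) xs) = sum_list (map f xs) *\<^sub>R v"
  by (induct xs) (simp_all add: scaleR_add_left)

lemma ts11: "ts (Suc 0) (Suc 0) = -1" by (simp add: ts_def stab_def)

context ob
begin

lemma L_sum: "L p (sum g S) = (\<Sum>i\<in>S. L p (g i))" using linear_sum[OF linL] by (simp add: o_def)
lemma R_sum: "R (sum g S) p = (\<Sum>i\<in>S. R (g i) p)" using linear_sum[OF linR] by (simp add: o_def)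
lemma L_sum2: "L (sum g S) x = (\<Sum>i\<in>S. L (g i) x)" using linear_sum[OF linL2] by (simp add: o_def)
lemma R_sum2: "R x (sum g S) = (\<Sum>i\<in>S. R x (g i))" using linear_sum[OF linR2] by (simp add: o_def)

lemma evp_add: "evp L R p (x + y) = evp L R p x + evp L R p y"
  by (induct p) (auto simp: linear_add[OF ev_linear] algebra_simps)
lemma evp_scale: "evp L R p (r *\<^sub>R x) = r *\<^sub>R evp L R p x"
  by (induct p) (auto simp: linear_scale[OF ev_linear] algebra_simps)
lemma evp_linear: "linear (evp L R p)"
  by (rule linearI) (simp_all add: evp_add evp_scale)
lemma Pr_linear: "linear (Pr L R)"
  unfolding Pr_def by (rule linearI) (simp_all add: evp_add evp_scale algebra_simps)

lemma Pr_add: "Pr L R (x + y) = Pr L R x + Pr L R y" using linear_add[OF Pr_linear] .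
lemma Pr_diff: "Pr L R (x - y) = Pr L R x - Pr L R y" using linear_diff[OF Pr_linear] .
lemma Pr_scale: "Pr L R (r *\<^sub>R x) = r *\<^sub>R Pr L R x" using linear_scale[OF Pr_linear] .
lemma Pr_zero: "Pr L R 0 = 0" using linear_0[OF Pr_linear] .
lemma Pr_sum: "Pr L R (sum g S) = (\<Sum>i\<in>S. Pr L R (g i))" using linear_sum[OF Pr_linear] by (simp add: o_def)

section \<open>Real part\<close>

lemma ReM_comm: "m \<in> ReM L R \<Longrightarrow> L p m = R m p" unfolding ReM_def by blast
lemma ReM_assoc: assumes "m \<in> ReM L R" shows "L p (L q m) = L (omul p q) m"
proof -
  have "assocL L p q m = 0" using assms unfolding ReM_def by blast
  then show ?thesis by (simp add: assocL_def)
qed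
lemma ReM_R: assumes "m \<in> ReM L R" shows "R (L p m) q = L (omul p q) m"
proof -
  have "assocL L q p m = assocM L R p m q" by (rule ax1)
  moreover have "assocL L q p m = 0" using assms unfolding ReM_def by blast
  ultimately have "R (L p m) q = L p (R m q)" by (simp add: assocM_def)
  then show ?thesis using assms by (simp add: ReM_comm[symmetric] ReM_assoc)
qed

lemma ReM_intro: assumes c: "\<And>p. L p m = R m p" shows "m \<in> ReM L R"
proof -
  have "assocL L p q m = 0" for p q
  proof -
    have A: "assocL L p q m = - assocL L q p m" by (rule ax3)
    have B1: "assocL L p q m = assocM L R q m p" by (rule ax1)
    have B2: "assocM L R p m q = assocR R m q p" by (rule ax2)
    have B3: "assocL L q p m = assocM L R p m q" by (rule ax1)
    have B4: "assocM L R q m p = assocR R m q p + assocL L q p m"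
      unfolding assocM_def assocR_def assocL_def using c by (simp add: algebra_simps)
    have E: "assocL L p q m = assocL L q p m + assocL L q p m" using B1 B2 B3 B4 by simp
    have "assocL L q p m + assocL L q p m + assocL L q p m = 0" using A E by (simp add: algebra_simps)
    moreover have "(3::real) *\<^sub>R assocL L q p m = (1 + 1 + 1) *\<^sub>R assocL L q p m" by simp
    moreover have "\<dots> = assocL L q p m + assocL L q p m + assocL L q p m"
      by (simp only: scaleR_add_left scaleR_one)
    ultimately have "3 *\<^sub>R assocL L q p m = 0" by simp
    then have "assocL L q p m = 0" by simp
    then show ?thesis using A by simp
  qed
  then show ?thesis using c by (simp add: ReM_def)
qed

lemma ReM_add: "a \<in> ReM L R \<Longrightarrow> b \<in> ReM L R \<Longrightarrow> a + b \<in> ReM L R"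
  by (rule ReM_intro) (simp add: ReM_comm L_add R_add)
lemma ReM_scale: "a \<in> ReM L R \<Longrightarrow> r *\<^sub>R a \<in> ReM L R"
  by (rule ReM_intro) (simp add: ReM_comm L_scale R_scale)
lemma ReM_zero: "0 \<in> ReM L R"
  by (rule ReM_intro) (simp add: L_zero R_zero)
lemma ReM_sum: "(\<And>i. i \<in> S \<Longrightarrow> g i \<in> ReM L R) \<Longrightarrow> sum g S \<in> ReM L R"
  by (induct S rule: infinite_finite_induct) (auto simp: ReM_zero ReM_add)

lemma evp_P12: "evp L R P12 y = 5 *\<^sub>R y - sum_list (map (\<lambda>i. L (obasis i) (R y (obasis i))) [1,2,3,4,5,6,7])"
  by (simp add: P12_def lt_def algebra_simps)

lemma upt18: "[1..<8] = [1,2,3,4,5,6,7::nat]" by code_simp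


lemma PrL: assumes m: "m \<in> ReM L R" and t: "t < 8"
  shows "Pr L R (L (obasis t) m) = (if t = 0 then m else 0)"
proof -
  have T5: "list_all (\<lambda>i. tt i (tt t i) = t) [1..<8]"
    "sum_list (map (\<lambda>i. ts t i * ts i (tt t i)) [1..<8]) = (if t = 0 then -7 else 5)"
    using tab_T5 t by (auto simp: list_all_iff)
  note T5 = T5[unfolded upt18]
  have "map (\<lambda>i. L (obasis i) (R (L (obasis t) m) (obasis i))) [1,2,3,4,5,6,7] =
        map (\<lambda>i. of_int (ts t i * ts i (tt t i)) *\<^sub>R L (obasis t) m) [1,2,3,4,5,6,7]"
  proof (rule map_cong[OF refl])
    fix i assume i: "i \<in> set [1,2,3,4,5,6,7::nat]"
    then have i8: "i < 8" and e: "tt i (tt t i) = t" using T5(1) by (auto simp: list_all_iff)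
    have "L (obasis i) (R (L (obasis t) m) (obasis i)) = L (omul (obasis i) (omul (obasis t) (obasis i))) m"
      using m by (simp add: ReM_R ReM_assoc)
    also have "\<dots> = of_int (ts t i * ts i (tt t i)) *\<^sub>R L (obasis t) m"
      using i8 t e by (simp add: omul_basis omul_scale2 tt_lt L_scale2 mult.commute)
    finally show "L (obasis i) (R (L (obasis t) m) (obasis i)) = of_int (ts t i * ts i (tt t i)) *\<^sub>R L (obasis t) m" .
  qed
  note meq = this
  have S: "sum_list (map (\<lambda>i. real_of_int (ts t i * ts i (tt t i))) [1,2,3,4,5,6,7]) = real_of_int (if t = 0 then -7 else 5)"
    using arg_cong[OF T5(2), of real_of_int] by simp
  have "evp L R P12 (L (obasis t) m) = 5 *\<^sub>R L (obasis t) m - sum_list (map (\<lambda>i. of_int (ts t i * ts i (tt t i)) *\<^sub>R L (obasis t) m) [1,2,3,4,5,6,7])"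
    unfolding evp_P12 meq ..
  also have "\<dots> = (5 - sum_list (map (\<lambda>i. real_of_int (ts t i * ts i (tt t i))) [1,2,3,4,5,6,7])) *\<^sub>R L (obasis t) m"
    by (simp only: sum_list_scaleR scaleR_diff_left)
  also have "\<dots> = (if t = 0 then 12 *\<^sub>R m else 0)"
    unfolding S using L1 by (simp add: oone_def)
  finally show ?thesis by (simp add: Pr_def)
qed

lemma PrLq: assumes m: "m \<in> ReM L R" shows "Pr L R (L q m) = ocoord q 0 *\<^sub>R m"
proof -
  have "L q m = (\<Sum>k<8. ocoord q k *\<^sub>R L (obasis k) m)"
    by (subst oct_decomp[of q]) (simp add: L_sum2 L_scale2)
  then have "Pr L R (L q m) = (\<Sum>k<8. ocoord q k *\<^sub>R (if k = 0 then m else 0))"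
    using m by (simp add: Pr_sum Pr_scale PrL)
  also have "\<dots> = ocoord q 0 *\<^sub>R m"
    by (simp add: if_distrib[of "\<lambda>x. _ *\<^sub>R x"] sum.delta cong: if_cong)
  finally show ?thesis .
qed

lemma Pr_ReM: "Pr L R y \<in> ReM L R"
proof (rule ReM_intro)
  fix p
  let ?m = "Pr L R y"
  have b: "L (obasis k) ?m = R ?m (obasis k)" if k: "k < 8" for k
  proof (cases "k = 0")
    case True then show ?thesis using L1 R1 by (simp add: oone_def)
  next
    case False
    have "evp L R (tN1 k) y = 0"
      using k False N1_1 N1_2 N1_3 N1_4 N1_5 N1_6 N1_7 unfolding less8 by auto
    then have "L (obasis k) (evp L R P12 y) = R (evp L R P12 y) (obasis k)"
      using k False by (simp add: tN1_def evp_pre lt_def)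
    then show ?thesis by (simp add: Pr_def L_scale R_scale)
  qed
  have "L p ?m = (\<Sum>k<8. ocoord p k *\<^sub>R L (obasis k) ?m)"
    by (subst oct_decomp[of p]) (simp add: L_sum2 L_scale2)
  also have "\<dots> = (\<Sum>k<8. ocoord p k *\<^sub>R R ?m (obasis k))"
    using b by simp
  also have "\<dots> = R ?m p"
    by (subst (2) oct_decomp[of p]) (simp add: R_sum2 R_scale2)
  finally show "L p ?m = R ?m p" .
qed

lemma crd_ReM: "crd L R k y \<in> ReM L R"
  unfolding crd_def by (rule ReM_scale[OF Pr_ReM])

lemma N2_expanded: "(\<Sum>k<8. of_int (ts k k) *\<^sub>R L (obasis k) (evp L R P12 (L (obasis k) y))) = 12 *\<^sub>R y"
proof -
  have "evp L R tN2 y = 0" by (rule N2c)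
  then show ?thesis
    unfolding sum8 by (simp add: tN2_def evp_pre evp_post lt_def ts_vals ts11 L1[unfolded oone_def] algebra_simps)
qed

lemma existence: "y = (\<Sum>k<8. L (obasis k) (crd L R k y))"
proof -
  have "(\<Sum>k<8. L (obasis k) (crd L R k y)) = (1/12) *\<^sub>R (\<Sum>k<8. of_int (ts k k) *\<^sub>R L (obasis k) (evp L R P12 (L (obasis k) y)))"
    by (simp add: crd_def Pr_def L_scale scaleR_sum_right)
  also have "\<dots> = y" by (simp add: N2_expanded)
  finally show ?thesis by simp
qed

lemma uniq_crd:
  assumes c: "\<And>j. j < 8 \<Longrightarrow> c j \<in> ReM L R" and y: "y = (\<Sum>j<8. L (obasis j) (c j))" and t: "t < 8"
  shows "crd L R t y = c t"
proof -
  have "Pr L R (L (obasis t) y) = (\<Sum>j<8. Pr L R (L (omul (obasis t) (obasis j)) (c j)))"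
    using c by (simp add: y L_sum Pr_sum ReM_assoc)
  also have "\<dots> = (\<Sum>j<8. (if j = t then of_int (ts t t) *\<^sub>R c j else 0))"
  proof (rule sum.cong[OF refl])
    fix j assume "j \<in> {..<8::nat}"
    then have j: "j < 8" by simp
    have "Pr L R (L (omul (obasis t) (obasis j)) (c j)) = of_int (ts t j) *\<^sub>R Pr L R (L (obasis (tt t j)) (c j))"
      using t j by (simp add: omul_basis L_scale2 Pr_scale)
    also have "\<dots> = (if j = t then of_int (ts t t) *\<^sub>R c j else 0)"
      using t j c[OF j] by (simp add: PrL tt_lt tt0 eq_commute[of t j])
    finally show "Pr L R (L (omul (obasis t) (obasis j)) (c j)) = (if j = t then of_int (ts t t) *\<^sub>R c j else 0)" .
  qed
  also have "\<dots> = of_int (ts t t) *\<^sub>R c t" using t by (simp add: sum.delta')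
  finally show ?thesis using tsq_real[OF t] by (simp add: crd_def)
qed

definition cf :: "'v \<Rightarrow> nat \<Rightarrow> 'v" where "cf y i = (if i < 8 then crd L R i y else 0)"

lemma re_coords_eq: "re_coords L R y = cf y"
  unfolding re_coords_def
proof (rule the_equality)
  show "(\<forall>i<8. cf y i \<in> ReM L R) \<and> (\<forall>i\<ge>8. cf y i = 0) \<and> y = (\<Sum>i<8. L (obasis i) (cf y i))"
    using existence[of y] by (simp add: cf_def crd_ReM)
next
  fix c assume h: "(\<forall>i<8. c i \<in> ReM L R) \<and> (\<forall>i\<ge>8. c i = 0) \<and> y = (\<Sum>i<8. L (obasis i) (c i))"
  show "c = cf y"
  proof
    fix i show "c i = cf y i"
      using h uniq_crd[of c y i] by (cases "i < 8") (auto simp: cf_def)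
  qed
qed

lemma ReV_Pr: "ReV L R y = Pr L R y"
  by (simp add: ReV_def re_coords_eq cf_def crd_def ts_vals L1[unfolded oone_def])

end

context ob
begin

lemma crd_linear: "linear (crd L R k)"
  unfolding crd_def by (rule linearI) (simp_all add: L_add L_scale Pr_add Pr_scale algebra_simps)

lemma CR: assumes k: "k < 8" shows "crd L R k y = of_int (ts k k) *\<^sub>R Pr L R (R y (obasis k))"
proof -
  let ?c = "\<lambda>j. crd L R j y"
  have "R y (obasis k) = (\<Sum>j<8. R (L (obasis j) (?c j)) (obasis k))"
    by (subst existence[of y]) (simp add: R_sum)
  also have "\<dots> = (\<Sum>j<8. L (omul (obasis j) (obasis k)) (?c j))"
    by (simp add: ReM_R crd_ReM)
  finally have "Pr L R (R y (obasis k)) = (\<Sum>j<8. ocoord (omul (obasis j) (obasis k)) 0 *\<^sub>R ?c j)"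
    by (simp add: Pr_sum PrLq crd_ReM)
  also have "\<dots> = (\<Sum>j<8. if j = k then of_int (ts k k) *\<^sub>R ?c j else 0)"
    by (rule sum.cong) (auto simp: ocoord_mul_basis k)
  also have "\<dots> = of_int (ts k k) *\<^sub>R ?c k" using k by (simp add: sum.delta')
  finally show ?thesis using tsq_real[OF k] by simp
qed

lemma coord_eq: assumes "\<And>k. k < 8 \<Longrightarrow> Pr L R (R y1 (obasis k)) = Pr L R (R y2 (obasis k))"
  shows "y1 = y2"
proof -
  have "crd L R k y1 = crd L R k y2" if "k < 8" for k using assms that by (simp add: CR)
  then show ?thesis using existence[of y1] existence[of y2] by simp
qed

lemma ReA: assumes i: "i < 8" and k: "k < 8"
  shows "Pr L R (assocR R w (obasis i) (obasis k)) = 0"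
proof -
  let ?c = "\<lambda>j. crd L R j w"
  have "assocR R w (obasis i) (obasis k) =
    (\<Sum>j<8. L (omul (omul (obasis j) (obasis i)) (obasis k)) (?c j) - L (omul (obasis j) (omul (obasis i) (obasis k))) (?c j))"
    unfolding assocR_def
    by (subst (1 2) existence[of w]) (simp add: R_sum ReM_R crd_ReM sum_subtractf)
  then have "Pr L R (assocR R w (obasis i) (obasis k)) =
    (\<Sum>j<8. (ocoord (omul (omul (obasis j) (obasis i)) (obasis k)) 0 - ocoord (omul (obasis j) (omul (obasis i) (obasis k))) 0) *\<^sub>R ?c j)"
    by (simp add: Pr_sum Pr_diff PrLq crd_ReM scaleR_diff_left)
  also have "\<dots> = 0"
    by (rule sum.neutral) (simp add: real_assoc_basis i k)
  finally show ?thesis .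
qed

lemma RO_Pr: assumes "right_para_linear L R f" shows "Pr L R (R (f x) p) = Pr L R (f (R x p))"
proof -
  have "ReV L R (Bp R f p x) = 0" using assms unfolding right_para_linear_def by blast
  then show ?thesis by (simp add: ReV_Pr Bp_def Pr_diff)
qed

lemma lemB_aux: assumes f: "linear f" and ro: "right_para_linear L R f" and m: "m \<in> ReM L R" and i: "i < 8"
  shows "f (L (obasis i) m) = R (f m) (obasis i)"
proof (rule coord_eq)
  fix k :: nat assume k: "k < 8"
  have "Pr L R (R (f (L (obasis i) m)) (obasis k)) = Pr L R (f (L (omul (obasis i) (obasis k)) m))"
    using RO_Pr[OF ro] m by (simp add: ReM_R)
  moreover have "Pr L R (R (R (f m) (obasis i)) (obasis k)) = Pr L R (R (f m) (omul (obasis i) (obasis k)))"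
    using ReA[OF i k, of "f m"] by (simp add: assocR_def Pr_diff)
  moreover have "\<dots> = Pr L R (f (L (omul (obasis i) (obasis k)) m))"
    using RO_Pr[OF ro] m by (simp add: ReM_comm)
  ultimately show "Pr L R (R (f (L (obasis i) m)) (obasis k)) = Pr L R (R (R (f m) (obasis i)) (obasis k))"
    by simp
qed

lemma lemB: assumes f: "linear f" and ro: "right_para_linear L R f" shows "oext L R f = f"
proof
  fix x
  have "oext L R f x = (\<Sum>i<8. R (f (crd L R i x)) (obasis i))"
    by (simp add: oext_def re_coords_eq cf_def)
  also have "\<dots> = (\<Sum>i<8. f (L (obasis i) (crd L R i x)))"
    by (simp add: lemB_aux[OF f ro] crd_ReM)
  also have "\<dots> = f x"
    by (subst (2) existence[of x]) (simp add: linear_sum[OF f] o_def)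
  finally show "oext L R f x = f x" .
qed

lemma lemG: assumes h: "linear h" and d: "\<And>i. i < 8 \<Longrightarrow> d i \<in> ReM L R"
  shows "oext L R h (\<Sum>i<8. L (q i) (d i)) = (\<Sum>i<8. R (h (d i)) (q i))"
proof -
  let ?z = "\<Sum>i<8. L (q i) (d i)"
  let ?D = "\<lambda>t. \<Sum>i<8. ocoord (q i) t *\<^sub>R d i"
  have DR: "?D t \<in> ReM L R" for t by (rule ReM_sum) (simp add: ReM_scale d)
  have "?z = (\<Sum>i<8. \<Sum>t<8. ocoord (q i) t *\<^sub>R L (obasis t) (d i))"
  proof (rule sum.cong[OF refl])
    fix i show "L (q i) (d i) = (\<Sum>t<8. ocoord (q i) t *\<^sub>R L (obasis t) (d i))"
      by (subst oct_decomp[of "q i"]) (simp add: L_sum2 L_scale2)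
  qed
  also have "\<dots> = (\<Sum>t<8. L (obasis t) (?D t))"
    by (subst sum.swap) (simp add: L_sum L_scale)
  finally have z: "?z = (\<Sum>t<8. L (obasis t) (?D t))" .
  have crdz: "crd L R t ?z = ?D t" if "t < 8" for t
    by (rule uniq_crd[OF _ z that]) (rule DR)
  have "oext L R h ?z = (\<Sum>t<8. R (h (?D t)) (obasis t))"
    by (simp add: oext_def re_coords_eq cf_def crdz)
  also have "\<dots> = (\<Sum>t<8. \<Sum>i<8. ocoord (q i) t *\<^sub>R R (h (d i)) (obasis t))"
    by (simp add: linear_sum[OF h] linear_scale[OF h] o_def R_sum R_scale)
  also have "\<dots> = (\<Sum>i<8. R (h (d i)) (\<Sum>t<8. ocoord (q i) t *\<^sub>R obasis t))"
    by (subst sum.swap) (simp add: R_sum2 R_scale2)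
  also have "\<dots> = (\<Sum>i<8. R (h (d i)) (q i))"
    by (simp add: oct_decomp[symmetric])
  finally show ?thesis .
qed

lemma oext_linear: assumes h: "linear h" shows "linear (oext L R h)"
proof (rule linearI)
  fix x y :: 'v and r :: real
  show "oext L R h (x + y) = oext L R h x + oext L R h y"
    by (simp add: oext_def re_coords_eq cf_def linear_add[OF crd_linear] linear_add[OF h] R_add sum.distrib)
  show "oext L R h (r *\<^sub>R x) = r *\<^sub>R oext L R h x"
    by (simp add: oext_def re_coords_eq cf_def linear_scale[OF crd_linear] linear_scale[OF h] R_scale scaleR_sum_right)
qed

lemma Bp_decomp: assumes f: "linear f"
  shows "Bp R f p x = (\<Sum>k<8. ocoord p k *\<^sub>R Bp R f (obasis k) x)"
proof -
  have "Bp R f p x = R (f x) (\<Sum>k<8. ocoord p k *\<^sub>R obasis k) - f (R x (\<Sum>k<8. ocoord p k *\<^sub>R obasis k))"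
    by (simp add: Bp_def oct_decomp[symmetric])
  also have "\<dots> = (\<Sum>k<8. ocoord p k *\<^sub>R Bp R f (obasis k) x)"
    by (simp add: Bp_def R_sum2 R_scale2 linear_sum[OF f] linear_scale[OF f] o_def scaleR_diff_right sum_subtractf)
  finally show ?thesis .
qed

lemma lemC: assumes h: "linear h" shows "right_para_linear L R (oext L R h)"
proof -
  have basis: "Pr L R (Bp R (oext L R h) (obasis k) x) = 0" if k: "k < 8" for k x
  proof -
    let ?c = "\<lambda>i. crd L R i x"
    have ox: "oext L R h x = (\<Sum>i<8. R (h (?c i)) (obasis i))"
      by (simp add: oext_def re_coords_eq cf_def)
    have "R x (obasis k) = (\<Sum>i<8. L (omul (obasis i) (obasis k)) (?c i))"
      by (subst existence[of x]) (simp add: R_sum ReM_R crd_ReM)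
    then have "oext L R h (R x (obasis k)) = (\<Sum>i<8. R (h (?c i)) (omul (obasis i) (obasis k)))"
      using lemG[OF h, of ?c "\<lambda>i. omul (obasis i) (obasis k)"] by (simp add: crd_ReM)
    then have "Bp R (oext L R h) (obasis k) x = (\<Sum>i<8. assocR R (h (?c i)) (obasis i) (obasis k))"
      by (simp add: Bp_def ox R_sum assocR_def sum_subtractf)
    then show ?thesis by (simp add: Pr_sum ReA k)
  qed
  show ?thesis
    unfolding right_para_linear_def
  proof (intro conjI allI)
    show "linear (oext L R h)" by (rule oext_linear[OF h])
    fix p x
    show "ReV L R (Bp R (oext L R h) p x) = 0"
      unfolding ReV_Pr by (subst Bp_decomp[OF oext_linear[OF h]]) (simp add: Pr_sum Pr_scale basis)
  qed
qed

lemma lemF: assumes f: "linear f" and ro: "right_para_linear L R f"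
  shows "olif L R (ReV L R \<circ> f) = f"
proof
  fix x
  have "olif L R (ReV L R \<circ> f) x = (\<Sum>i<8. R (crd L R i (f x)) (obasis i))"
    unfolding olif_def
  proof (rule sum.cong[OF refl])
    fix i assume "i \<in> {..<8::nat}"
    then have i: "i < 8" by simp
    have "(ReV L R \<circ> f) (R x (ocnj (obasis i))) = of_int (ts i i) *\<^sub>R Pr L R (f (R x (obasis i)))"
      using i by (simp add: ReV_Pr ocnj_basis R_scale2 linear_scale[OF f] Pr_scale)
    also have "\<dots> = crd L R i (f x)"
      using i by (simp add: CR RO_Pr[OF ro])
    finally show "R ((ReV L R \<circ> f) (R x (ocnj (obasis i)))) (obasis i) = R (crd L R i (f x)) (obasis i)"
      by simp
  qed
  also have "\<dots> = (\<Sum>i<8. L (obasis i) (crd L R i (f x)))"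
    by (simp add: ReM_comm crd_ReM)
  also have "\<dots> = f x" by (simp add: existence[symmetric])
  finally show "olif L R (ReV L R \<circ> f) x = f x" .
qed

lemma RO_id: "right_para_linear L R id"
  by (simp add: right_para_linear_def Bp_def ReV_Pr Pr_zero linear_id)

end


theorem mainTheorem2:
  fixes L :: "oct \<Rightarrow> 'v::banach \<Rightarrow> 'v" and R :: "'v \<Rightarrow> oct \<Rightarrow> 'v" and T :: "'v \<Rightarrow> 'v"
  assumes "banach_oct_bimodule L R"
    and "T \<in> B_RO L R"
  shows "((\<forall>n::nat. \<forall>x. oassoc L R T (pow_ext L R T n) x = 0)
            \<longleftrightarrow> (\<forall>n::nat. T ^^ n \<in> B_RO L R))
       \<and> ((\<forall>n::nat. T ^^ n \<in> B_RO L R)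
            \<longleftrightarrow> (\<forall>n::nat. \<forall>x. oassoc L R (pow_lif L R T n) T x = 0))
       \<and> ((\<forall>n::nat. T ^^ n \<in> B_RO L R) \<longrightarrow>
            (\<forall>n::nat. pow_ext L R T n = T ^^ n \<and> T ^^ n = pow_lif L R T n) \<and>
            (\<forall>n m::nat. ocomp L R (T ^^ n) (T ^^ m) = T ^^ (n + m)))"
proof -
  interpret ob L R using assms(1) by (simp add: ob_def banach_oct_bimodule_def)
  have TB: "bounded_linear T" using assms(2) by (simp add: B_RO_def)
  have bl: "bounded_linear (T ^^ n)" for n
  proof (induct n)
    case 0 then show ?case by (simp add: bounded_linear_ident[unfolded id_def] id_def)
  next
    case (Suc n) then show ?case using bounded_linear_compose[OF TB] by (simp add: o_def)
  qed
  have lin: "linear (T ^^ n)" for n using bl[of n] bounded_linear.linear by blast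
  have BRO: "T ^^ n \<in> B_RO L R \<longleftrightarrow> right_para_linear L R (T ^^ n)" for n
    using bl[of n] by (simp add: B_RO_def)
  have pe: "pow_ext L R T n = T ^^ n" if "right_para_linear L R (T ^^ n)" for n
    using lemB[OF lin that] by (simp add: pow_ext_def)
  have pl: "pow_lif L R T n = T ^^ n" if "right_para_linear L R (T ^^ n)" for n
    using lemF[OF lin that] by (simp add: pow_lif_def)
  have ext_eq: "right_para_linear L R (T ^^ n)" if "oext L R (T ^^ n) = T ^^ n" for n
    using lemC[OF lin[of n]] that by simp
  have rp0: "right_para_linear L R (T ^^ 0)" using RO_id by simp
  have sucL: "T \<circ> T ^^ n = T ^^ Suc n" for n by simp
  have sucR: "T ^^ n \<circ> T = T ^^ Suc n" for n by (simp only: funpow_Suc_right)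
  have A: "(\<forall>n x. oassoc L R T (pow_ext L R T n) x = 0) \<longleftrightarrow> (\<forall>n. right_para_linear L R (T ^^ n))"
  proof
    assume H: "\<forall>n x. oassoc L R T (pow_ext L R T n) x = 0"
    show "\<forall>n. right_para_linear L R (T ^^ n)"
    proof
      fix n show "right_para_linear L R (T ^^ n)"
      proof (induct n)
        case 0 then show ?case by (rule rp0)
      next
        case (Suc n)
        have "oext L R (T ^^ Suc n) x = (T ^^ Suc n) x" for x
        proof -
          have "oassoc L R T (pow_ext L R T n) x = 0" using H by blast
          then have "oext L R (T \<circ> T ^^ n) x = T ((T ^^ n) x)"
            using pe[OF Suc] by (simp add: oassoc_def ocomp_def)
          then show ?thesis by simp
        qed
        then show ?case by (intro ext_eq ext)
      qed
    qed
  next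
    assume H: "\<forall>n. right_para_linear L R (T ^^ n)"
    show "\<forall>n x. oassoc L R T (pow_ext L R T n) x = 0"
    proof (intro allI)
      fix n x
      have e1: "pow_ext L R T n = T ^^ n" using pe H by blast
      have "oext L R (T ^^ Suc n) = T ^^ Suc n" using lemB[OF lin] H by blast
      then have e2: "oext L R (T \<circ> T ^^ n) = T \<circ> T ^^ n" by (simp only: funpow.simps)
      show "oassoc L R T (pow_ext L R T n) x = 0" by (simp add: oassoc_def ocomp_def e1 e2)
    qed
  qed
  have B: "(\<forall>n. right_para_linear L R (T ^^ n)) \<longleftrightarrow> (\<forall>n x. oassoc L R (pow_lif L R T n) T x = 0)"
  proof
    assume H: "\<forall>n. right_para_linear L R (T ^^ n)"
    show "\<forall>n x. oassoc L R (pow_lif L R T n) T x = 0"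
    proof (intro allI)
      fix n x
      have e1: "pow_lif L R T n = T ^^ n" using pl H by blast
      have "oext L R (T ^^ Suc n) = T ^^ Suc n" using lemB[OF lin] H by blast
      then have e2: "oext L R (T ^^ n \<circ> T) = T ^^ n \<circ> T" by (simp only: sucR)
      show "oassoc L R (pow_lif L R T n) T x = 0" by (simp add: oassoc_def ocomp_def e1 e2)
    qed
  next
    assume H: "\<forall>n x. oassoc L R (pow_lif L R T n) T x = 0"
    show "\<forall>n. right_para_linear L R (T ^^ n)"
    proof
      fix n show "right_para_linear L R (T ^^ n)"
      proof (induct n)
        case 0 then show ?case by (rule rp0)
      next
        case (Suc n)
        have "oext L R (T ^^ Suc n) x = (T ^^ Suc n) x" for x
        proof -
          have "oassoc L R (pow_lif L R T n) T x = 0" using H by blast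
          then have "oext L R (T ^^ n \<circ> T) x = (T ^^ n) (T x)"
            using pl[OF Suc] by (simp add: oassoc_def ocomp_def)
          then show ?thesis by (simp only: sucR[symmetric] comp_apply)
        qed
        then show ?case by (intro ext_eq ext)
      qed
    qed
  qed
  have C: "(\<forall>n. right_para_linear L R (T ^^ n)) \<longrightarrow>
            (\<forall>n. pow_ext L R T n = T ^^ n \<and> T ^^ n = pow_lif L R T n) \<and>
            (\<forall>n m. ocomp L R (T ^^ n) (T ^^ m) = T ^^ (n + m))"
  proof
    assume H: "\<forall>n. right_para_linear L R (T ^^ n)"
    show "(\<forall>n. pow_ext L R T n = T ^^ n \<and> T ^^ n = pow_lif L R T n) \<and>
            (\<forall>n m. ocomp L R (T ^^ n) (T ^^ m) = T ^^ (n + m))"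
    proof (intro conjI allI)
      fix n
      show "pow_ext L R T n = T ^^ n" using pe H by blast
      show "T ^^ n = pow_lif L R T n" using pl H by metis
    next
      fix n m
      have "oext L R (T ^^ (n + m)) = T ^^ (n + m)" using lemB[OF lin] H by blast
      then show "ocomp L R (T ^^ n) (T ^^ m) = T ^^ (n + m)" by (simp add: ocomp_def funpow_add)
    qed
  qed
  show ?thesis unfolding BRO using A B C by blast
qed

end
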